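(* Let $k\in\mathbb C$ with $\Re(k)<0$ and $\delta>0$. Let $f:\mathbb Q\to\mathbb C$ satisfy $f(x)=f(x+1)$ for $x\in\mathbb Q\setminus[-1,0]$, and let $h:\mathbb R\setminus\{0\}\to\mathbb C$ satisfy $h(x)=f(x)-|x|^{-k}f(-1/x)$ for $x\in\mathbb Q\cap([-1,1]\setminus\{0\})$, together with $$\sup_{\substack{x,y\in\mathbb R\setminus\{0\}\\ |x-y|<e^{-\varepsilon^{\delta-1}},\ |x|>2\varepsilon}}|h(x)-h(y)|=o(1)\quad(\varepsilon\to0^+),\qquad h(x)=O\big(e^{|x|^{\delta-1}}\big)\ \ (x\in[-1,1]\setminus\{0\}).$$ Then $f$ has property $\mathscr S(1+\delta)$.
   Context: For $x\in\mathbb R$ write $x=[b_0(x);b_1(x),\dots]$; $r(x)$ is the length of the minimal expansion for rational $x$, $r(x)=\infty$ otherwise. $\mathfrak T(B):=\{x\colon b_j(x)\leq\max(B,j(\log j)^2)\ \forall 1\leq j\leq r(x)\}$. For $x\in\mathfrak T(B)$, $V(B,m,x):=\{x'\in\mathbb Q\cap\mathfrak T(B)\colon r(x')\geq m,\ b_j(x')=b_j(x)\ \forall j\leq m\}$. Property $\mathscr S(\lambda)$: $\sup_{x\in\mathfrak T(m^\lambda)}\sup_{x',x''\in V(m^\lambda,m,x)}|f(x')-f(x'')|\to0$ as $m\to\infty$. *)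

theory Defs
  imports "HOL-Analysis.Analysis" "HOL-Library.Extended_Nat"
begin

fun cf_rem :: "real \<Rightarrow> nat \<Rightarrow> real" where
  "cf_rem x 0 = frac x"
| "cf_rem x (Suc j) = (if cf_rem x j = 0 then 0 else frac (1 / cf_rem x j))"

text \<open>b_j(x): b_0 = floor x, b_{j+1} = floor (1/t_j) (only meaningful for j+1 \<le> r(x)).\<close>
fun cf_digit :: "nat \<Rightarrow> real \<Rightarrow> int" where
  "cf_digit 0 x = \<lfloor>x\<rfloor>"
| "cf_digit (Suc j) x = \<lfloor>1 / cf_rem x j\<rfloor>"

text \<open>r(x): length of the (minimal) expansion; infinity if it never terminates.\<close>
definition cf_len :: "real \<Rightarrow> enat" where
  "cf_len x = (if \<exists>j. cf_rem x j = 0 then enat (LEAST j. cf_rem x j = 0) else \<infinity>)"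

definition cfT :: "real \<Rightarrow> real set" where
  "cfT B = {x. \<forall>j::nat. 1 \<le> j \<and> enat j \<le> cf_len x \<longrightarrow>
              real_of_int (cf_digit j x) \<le> max B (real j * (ln (real j))^2)}"

definition cfV :: "real \<Rightarrow> nat \<Rightarrow> real \<Rightarrow> real set" where
  "cfV B m x = {x'. x' \<in> \<rat> \<and> x' \<in> cfT B \<and> enat m \<le> cf_len x' \<and>
                    (\<forall>j\<le>m. cf_digit j x' = cf_digit j x)}"

text \<open>Property S(lambda): the supremum tends to 0 as m \<rightarrow> \<infinity>, written out with epsilons.\<close>
definition propS :: "real \<Rightarrow> (real \<Rightarrow> complex) \<Rightarrow> bool" where
  "propS lam f = (\<forall>e>0. \<forall>\<^sub>F m in sequentially.
      \<forall>x \<in> cfT (real m powr lam). \<forall>x' \<in> cfV (real m powr lam) m x. \<forall>x'' \<in> cfV (real m powr lam) m x.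
        norm (f x' - f x'') \<le> e)"

end

theory Submission
  imports Defs "HOL-Real_Asymp.Real_Asymp"
begin

declare cf_rem.simps(2)[simp del] cf_digit.simps(2)[simp del]

lemma rem_range: "0 \<le> cf_rem x j \<and> cf_rem x j < 1"
  by (cases j) (auto simp: frac_lt_1 cf_rem.simps(2))

lemma rem_step:
  assumes "cf_rem x j \<noteq> 0"
  shows "cf_rem x (Suc j) = 1 / cf_rem x j - cf_digit (Suc j) x"
  using assms by (simp add: frac_def cf_rem.simps(2) cf_digit.simps(2))

lemma digit_ge1:
  assumes "cf_rem x j \<noteq> 0"
  shows "cf_digit (Suc j) x \<ge> 1"
proof -
  have "0 < cf_rem x j" "cf_rem x j < 1" using rem_range[of x j] assms by auto
  then have "1 < 1 / cf_rem x j" by simp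
  then show ?thesis by (simp add: cf_digit.simps(2))
qed

lemma rem_eq:
  assumes "cf_rem x j \<noteq> 0"
  shows "cf_rem x j = 1 / (cf_digit (Suc j) x + cf_rem x (Suc j))"
  using rem_step[OF assms] assms by simp

lemma rem_lower:
  assumes "cf_rem x j \<noteq> 0"
  shows "cf_rem x j \<ge> 1 / (cf_digit (Suc j) x + 1)"
proof -
  have "cf_rem x (Suc j) < 1" "cf_digit (Suc j) x \<ge> 1"
    using rem_range[of x "Suc j"] digit_ge1[OF assms] by auto
  then have "1 / (cf_digit (Suc j) x + 1) \<le> 1 / (cf_digit (Suc j) x + cf_rem x (Suc j))"
    using rem_range[of x "Suc j"] by (intro divide_left_mono) auto
  then show ?thesis using rem_eq[OF assms] by simp
qed

lemma rem_pair:
  "cf_rem x j * cf_rem x (Suc j) \<le> 1/2"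
proof (cases "cf_rem x j = 0")
  case False
  define b where "b = real_of_int (cf_digit (Suc j) x)"
  define t where "t = cf_rem x (Suc j)"
  have b: "b \<ge> 1" using digit_ge1[OF False] by (simp add: b_def)
  have t: "0 \<le> t" "t < 1" using rem_range[of x "Suc j"] by (auto simp: t_def)
  have e: "cf_rem x j = 1 / (b + t)"
    using rem_eq[OF False] by (simp add: b_def t_def)
  have "cf_rem x j * cf_rem x (Suc j) = 1 / (b + t) * t"
    using e t_def by simp
  also have "\<dots> = t / (b + t)" by simp
  also have "\<dots> \<le> 1/2" using b t by (simp add: field_simps)
  finally show ?thesis .
qed simp

lemma rem_shift:
  assumes "frac x \<noteq> 0"
  shows "cf_rem x (Suc j) = cf_rem (1 / frac x) j"
proof (induction j)
  case 0 then show ?case using assms by (simp add: cf_rem.simps(2))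
next
  case (Suc j) then show ?case by (simp add: cf_rem.simps(2))
qed

lemma rem_rat: "x \<in> \<rat> \<Longrightarrow> cf_rem x j \<in> \<rat>"
proof (induction j)
  case 0 then show ?case by (simp add: frac_def)
next
  case (Suc j) then show ?case by (auto simp: frac_def cf_rem.simps(2))
qed

lemma frac_div_int:
  assumes "q > 0"
  shows "frac (real_of_int p / real_of_int q) = real_of_int (p mod q) / real_of_int q"
proof -
  have "real_of_int p = real_of_int (p div q) * q + real_of_int (p mod q)"
    by (metis of_int_add of_int_mult div_mult_mod_eq)
  moreover have "frac (real_of_int p / real_of_int q) = real_of_int p / real_of_int q - real_of_int (p div q)"
    by (simp add: frac_def floor_divide_of_int_eq)
  ultimately show ?thesis using assms
    by (simp add: field_simps)
qed

lemma rat_terminates_aux: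
  "\<forall>p. \<exists>j. cf_rem (real_of_int p / real_of_int (int q)) j = 0"
proof (induction q rule: less_induct)
  case (less q)
  show ?case
  proof
    fix p
    show "\<exists>j. cf_rem (real_of_int p / real_of_int (int q)) j = 0"
    proof (cases "frac (real_of_int p / real_of_int (int q)) = 0")
      case True then show ?thesis by (intro exI[of _ 0]) simp
    next
      case False
      then have q0: "q > 0" by (cases q) auto
      define p' where "p' = p mod int q"
      have fr: "frac (real_of_int p / real_of_int (int q)) = real_of_int p' / real_of_int (int q)"
        using frac_div_int[of "int q" p] q0 by (simp add: p'_def)
      have "p' \<ge> 0" using q0 by (simp add: p'_def)
      moreover have "p' \<noteq> 0" using False fr by auto
      ultimately have p'pos: "p' > 0" by simp
      have p'lt: "p' < int q" using q0 by (simp add: p'_def)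
      have "nat p' < q" using p'lt p'pos by simp
      from less[OF this] obtain j where
        "cf_rem (real_of_int (int q) / real_of_int (int (nat p'))) j = 0" by blast
      then have "cf_rem (1 / frac (real_of_int p / real_of_int (int q))) j = 0"
        using fr p'pos by simp
      then show ?thesis using rem_shift[OF False] by metis
    qed
  qed
qed

lemma rat_terminates:
  assumes "x \<in> \<rat>" shows "\<exists>j. cf_rem x j = 0"
proof -
  obtain p q where "q > 0" "x = real_of_int p / real_of_int q"
    using assms by (metis Rats_cases' of_int_of_nat_eq zero_less_imp_eq_int)
  then show ?thesis using rat_terminates_aux[of "nat q"] by auto
qed

lemma rem_zero_mono: "cf_rem x j = 0 \<Longrightarrow> j \<le> i \<Longrightarrow> cf_rem x i = 0"
  by (induction i) (auto simp: le_Suc_eq cf_rem.simps(2))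

lemma len_rat:
  assumes "x \<in> \<rat>"
  obtains r where "cf_len x = enat r" "cf_rem x r = 0" "\<And>j. j < r \<Longrightarrow> cf_rem x j \<noteq> 0"
proof -
  have ex: "\<exists>j. cf_rem x j = 0" using rat_terminates[OF assms] .
  define r where "r = (LEAST j. cf_rem x j = 0)"
  have "cf_len x = enat r" using ex by (simp add: cf_len_def r_def)
  moreover have "cf_rem x r = 0" using LeastI_ex[OF ex] by (simp add: r_def)
  moreover have "\<And>j. j < r \<Longrightarrow> cf_rem x j \<noteq> 0" using not_less_Least r_def by blast
  ultimately show ?thesis using that by blast
qed

lemma cfT_digit:
  assumes "x \<in> cfT B" "1 \<le> j" "enat j \<le> cf_len x"
  shows "real_of_int (cf_digit j x) \<le> max B (real j * (ln (real j))^2)"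
  using assms by (auto simp: cfT_def)

lemma prod_pair_bound:
  fixes v :: "nat \<Rightarrow> real"
  assumes q: "0 < q" "q \<le> 1"
    and v: "\<And>i. j \<le> i \<Longrightarrow> i < j + l \<Longrightarrow> 0 \<le> v i \<and> v i \<le> 1"
    and pr: "\<And>i. j \<le> i \<Longrightarrow> Suc i < j + l \<Longrightarrow> v i * v (Suc i) \<le> q"
  shows "prod v {j..<j+l} \<le> sqrt q ^ l / sqrt q"
  using v pr
proof (induction l arbitrary: j rule: less_induct)
  case (less l)
  show ?case
  proof (cases l)
    case 0 then show ?thesis using q by (simp add: real_sqrt_le_1_iff)
  next
    case (Suc l1)
    note l1 = Suc
    show ?thesis
    proof (cases l1)
      case 0 then show ?thesis using less.prems(1)[of j] q l1 by simp
    next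
      case (Suc l2)
      have split: "{j..<j+l} = insert j (insert (Suc j) {Suc (Suc j)..<Suc (Suc j) + l2})"
        using l1 Suc by auto
      have "prod v {j..<j+l} = v j * v (Suc j) * prod v {Suc (Suc j)..<Suc (Suc j) + l2}"
        unfolding split by simp
      also have "\<dots> \<le> q * (sqrt q ^ l2 / sqrt q)"
      proof (rule mult_mono)
        show "v j * v (Suc j) \<le> q" using less.prems(2)[of j] l1 Suc by simp
        show "prod v {Suc (Suc j)..<Suc (Suc j) + l2} \<le> sqrt q ^ l2 / sqrt q"
          using less.IH[of l2 "Suc (Suc j)"] less.prems l1 Suc by simp
        show "0 \<le> q" using q by simp
        show "0 \<le> prod v {Suc (Suc j)..<Suc (Suc j) + l2}"
          using less.prems(1) l1 Suc by (intro prod_nonneg) auto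
      qed
      also have "\<dots> = sqrt q ^ l / sqrt q" using l1 Suc q
        by (simp add: mult.assoc[symmetric])
      finally show ?thesis .
    qed
  qed
qed

lemma close_aux:
  assumes dig: "\<And>j. 1 \<le> j \<Longrightarrow> j \<le> m \<Longrightarrow> cf_digit j x = cf_digit j y"
    and nz: "\<And>j. j < m \<Longrightarrow> cf_rem x j \<noteq> 0 \<and> cf_rem y j \<noteq> 0"
  shows "d \<le> m \<Longrightarrow> \<bar>cf_rem x (m - d) - cf_rem y (m - d)\<bar> \<le> prod (cf_rem x) {m - d..<m}"
proof (induction d)
  case 0
  then show ?case using rem_range[of x m] rem_range[of y m] by auto
next
  case (Suc d)
  define i where "i = m - Suc d"
  have i: "i < m" "Suc i = m - d" using Suc.prems by (auto simp: i_def)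
  have IH: "\<bar>cf_rem x (Suc i) - cf_rem y (Suc i)\<bar> \<le> prod (cf_rem x) {Suc i..<m}"
    using Suc i by simp
  define b where "b = real_of_int (cf_digit (Suc i) x)"
  have b: "b \<ge> 1" using digit_ge1 nz[OF i(1)] by (simp add: b_def)
  have by': "real_of_int (cf_digit (Suc i) y) = b" using dig[of "Suc i"] i by (simp add: b_def)
  define u v where "u = cf_rem x (Suc i)" and "v = cf_rem y (Suc i)"
  have uv: "0 \<le> u" "0 \<le> v" using rem_range by (auto simp: u_def v_def)
  have ex: "cf_rem x i = 1 / (b + u)" using rem_eq nz[OF i(1)] by (simp add: b_def u_def)
  have ey: "cf_rem y i = 1 / (b + v)" using rem_eq[of y i] nz[OF i(1)] by' by (simp add: v_def)
  have "cf_rem x i - cf_rem y i = cf_rem x i * cf_rem y i * (v - u)"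
    unfolding ex ey using b uv by (simp add: field_simps)
  then have "\<bar>cf_rem x i - cf_rem y i\<bar> = cf_rem x i * cf_rem y i * \<bar>u - v\<bar>"
    using rem_range[of x i] rem_range[of y i] by (simp add: abs_mult abs_minus_commute)
  also have "\<dots> \<le> cf_rem x i * 1 * \<bar>u - v\<bar>"
    using rem_range[of x i] rem_range[of y i] by (intro mult_right_mono mult_left_mono) auto
  also have "\<dots> \<le> cf_rem x i * prod (cf_rem x) {Suc i..<m}"
    using IH rem_range[of x i] by (simp add: u_def v_def mult_left_mono)
  also have "\<dots> = prod (cf_rem x) {i..<m}"
    using i(1) by (simp add: prod.atLeast_Suc_lessThan)
  finally show ?case using i by (simp add: i_def)
qed

lemma close:
  assumes dig: "\<And>j. 1 \<le> j \<Longrightarrow> j \<le> m \<Longrightarrow> cf_digit j x = cf_digit j y"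
    and nz: "\<And>j. j < m \<Longrightarrow> cf_rem x j \<noteq> 0 \<and> cf_rem y j \<noteq> 0"
    and "i \<le> m"
  shows "\<bar>cf_rem x i - cf_rem y i\<bar> \<le> sqrt (1/2) ^ (m - i) / sqrt (1/2)"
proof -
  have "\<bar>cf_rem x i - cf_rem y i\<bar> \<le> prod (cf_rem x) {i..<m}"
    using close_aux[where m=m and x=x and y=y and d="m - i"] dig nz assms(3) by simp
  also have "\<dots> = prod (cf_rem x) {i..<i + (m - i)}" using assms(3) by simp
  also have "\<dots> \<le> sqrt (1/2) ^ (m - i) / sqrt (1/2)"
    by (rule prod_pair_bound) (use rem_range rem_pair in \<open>auto intro: less_imp_le\<close>)
  finally show ?thesis .
qed

definition cp :: "complex \<Rightarrow> real \<Rightarrow> complex" where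
  "cp k t = complex_of_real t powr (- k)"

lemma cp_norm: "t > 0 \<Longrightarrow> norm (cp k t) = t powr (- Re k)"
  unfolding cp_def by (subst norm_powr_real_powr) auto

lemma cp_exp: "t > 0 \<Longrightarrow> cp k t = exp (- k * complex_of_real (ln t))"
  unfolding cp_def by (simp add: powr_def Ln_of_real)

lemma ln_diff_le:
  fixes l u v :: real
  assumes "0 < l" "l \<le> u" "l \<le> v"
  shows "\<bar>ln u - ln v\<bar> \<le> \<bar>u - v\<bar> / l"
proof -
  have a: "ln a - ln b \<le> \<bar>a - b\<bar> / l" if "l \<le> a" "l \<le> b" for a b :: real
  proof -
    have "0 < a" using that assms by linarith
    have "0 < b" using that assms by linarith
    then have "ln a - ln b = ln (a / b)" using \<open>0 < a\<close> by (simp add: ln_div)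
    also have "\<dots> \<le> a / b - 1" using that assms by (intro ln_le_minus_one) auto
    also have "\<dots> = (a - b) / b" using that assms by (simp add: field_simps)
    also have "\<dots> \<le> \<bar>a - b\<bar> / b" using that assms by (intro divide_right_mono) auto
    also have "\<dots> \<le> \<bar>a - b\<bar> / l" using that assms by (intro divide_left_mono) auto
    finally show ?thesis .
  qed
  show ?thesis using a[of u v] a[of v u] assms by (auto simp: abs_minus_commute)
qed

lemma cp_diff:
  assumes k: "Re k < 0" and l: "0 < l" "l \<le> u" "l \<le> v" "u \<le> 1" "v \<le> 1"
  shows "norm (cp k u - cp k v) \<le> norm k * (\<bar>u - v\<bar> / l) * exp (norm k * (\<bar>u - v\<bar> / l))"
proof -
  define A where "A = - k * complex_of_real (ln u)"
  define B where "B = - k * complex_of_real (ln v)"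
  have u0: "u > 0" "v > 0" using l by auto
  have e: "exp B * (exp (A - B) - 1) = exp A - exp B"
    by (simp add: algebra_simps exp_add[symmetric])
  have "cp k u - cp k v = exp B * (exp (A - B) - 1)"
    unfolding e using u0 by (simp add: cp_exp A_def B_def)
  then have n1: "norm (cp k u - cp k v) = norm (exp B) * norm (exp (A - B) - 1)"
    by (simp add: norm_mult)
  have nB: "norm (exp B) \<le> 1"
  proof -
    have "Re B = - Re k * ln v" by (simp add: B_def)
    also have "\<dots> \<le> 0" using k u0 l by (intro mult_nonneg_nonpos) auto
    finally show ?thesis by simp
  qed
  have nT: "norm (exp (A - B) - 1) \<le> exp (norm (A - B)) * norm (A - B)"
    using Taylor_exp_field[of "A - B" 0] by simp
  have AB: "norm (A - B) \<le> norm k * (\<bar>u - v\<bar> / l)"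
  proof -
    have eq: "A - B = - k * complex_of_real (ln u - ln v)" by (simp add: A_def B_def algebra_simps)
    have "norm (A - B) = norm (- k) * norm (complex_of_real (ln u - ln v))"
      unfolding eq by (simp only: norm_mult)
    then have "norm (A - B) = norm k * \<bar>ln u - ln v\<bar>" by (simp only: norm_minus_cancel norm_of_real)
    also have "\<dots> \<le> norm k * (\<bar>u - v\<bar> / l)"
      using ln_diff_le[OF l(1-3)] by (intro mult_left_mono) auto
    finally show ?thesis .
  qed
  have "norm (cp k u - cp k v) \<le> norm (exp (A - B) - 1)"
    unfolding n1 using nB by (intro mult_left_le_one_le) auto
  also have "\<dots> \<le> exp (norm (A - B)) * norm (A - B)" by (rule nT)
  also have "\<dots> \<le> exp (norm k * (\<bar>u - v\<bar> / l)) * (norm k * (\<bar>u - v\<bar> / l))"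
    using AB by (intro mult_mono) auto
  finally show ?thesis by (simp add: mult_ac)
qed

lemma telescope:
  fixes D c :: "nat \<Rightarrow> complex"
  shows "D 0 = (\<Sum>j<N. prod c {..<j} * (D j - c j * D (Suc j))) + prod c {..<N} * D N"
  by (induction N) (auto simp: algebra_simps)

lemma Wbound:
  fixes c :: "nat \<Rightarrow> complex"
  assumes "\<And>j. j < n \<Longrightarrow> norm (c j) \<le> 1"
    and "\<And>j. Suc j < n \<Longrightarrow> norm (c j) * norm (c (Suc j)) \<le> q"
    and "0 < q" "q \<le> 1" "j \<le> n"
  shows "norm (prod c {..<j}) \<le> sqrt q ^ j / sqrt q"
proof -
  have "norm (prod c {..<j}) = prod (\<lambda>i. norm (c i)) {0..<0 + j}"
    by (simp add: prod_norm atLeast0LessThan)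
  also have "\<dots> \<le> sqrt q ^ j / sqrt q"
    by (rule prod_pair_bound) (use assms in auto)
  finally show ?thesis .
qed

lemma gbound:
  fixes g H c :: "nat \<Rightarrow> complex"
  assumes rec: "\<And>j. j < n \<Longrightarrow> g j = H j + c j * g (Suc j)"
    and c1: "\<And>j. j < n \<Longrightarrow> norm (c j) \<le> 1"
    and pair: "\<And>j. Suc j < n \<Longrightarrow> norm (c j) * norm (c (Suc j)) \<le> q"
    and Hb: "\<And>j. j < n \<Longrightarrow> norm (H j) \<le> K * E ^ j"
    and gn: "norm (g n) \<le> F"
    and pos: "K \<ge> 0" "E \<ge> 1" "q \<ge> 0" "q * E^2 \<le> \<rho>" "\<rho> < 1" "F \<ge> 0"
  shows "j \<le> n \<Longrightarrow> norm (g j) \<le> (K * (1 + E) + F) / (1 - \<rho>) * E ^ j"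
proof -
  define Z where "Z = (K * (1 + E) + F) / (1 - \<rho>)"
  have rho0: "\<rho> \<ge> 0" using pos(3,4) by (meson order.trans mult_nonneg_nonneg zero_le_power2)
  have X: "K * (1 + E) + F \<ge> 0" using pos by simp
  have Z0: "Z \<ge> 0" unfolding Z_def using X pos by (intro divide_nonneg_pos) auto
  have Z1: "(1 - \<rho>) * Z = K * (1 + E) + F" using pos by (simp add: Z_def)
  have "\<rho> * Z \<ge> 0" using rho0 Z0 by simp
  then have ZKF: "Z \<ge> K * (1 + E) + F" using Z1 by (simp add: algebra_simps)
  have KE: "K * E \<ge> 0" using pos by simp
  have ZKF2: "Z \<ge> K + F" using ZKF KE by (simp add: algebra_simps)
  have main: "norm (g j) \<le> Z * E ^ j" if "j \<le> n" for j
    using that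
  proof (induction "n - j" arbitrary: j rule: less_induct)
    case less
    have Ej: "E ^ j \<ge> 1" using pos by simp
    consider "j = n" | "Suc j = n" | "Suc (Suc j) \<le> n" using less.prems by linarith
    then show ?case
    proof cases
      case 1
      have "F \<le> Z" using ZKF2 pos by linarith
      also have "Z \<le> Z * E ^ j" using Z0 Ej by (simp add: mult_le_cancel_left1)
      finally show ?thesis using gn 1 by simp
    next
      case 2
      have "norm (g j) \<le> norm (H j) + norm (c j * g (Suc j))"
        using rec[of j] 2 norm_triangle_ineq by simp
      also have "\<dots> = norm (H j) + norm (c j) * norm (g (Suc j))" by (simp add: norm_mult)
      also have "\<dots> \<le> K * E ^ j + 1 * F"
        using Hb[of j] c1[of j] gn 2 by (intro add_mono mult_mono) auto
      also have "\<dots> \<le> K * E ^ j + F * E ^ j"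
      proof -
        have "F * 1 \<le> F * E ^ j" using Ej pos(6) by (rule mult_left_mono)
        then show ?thesis by simp
      qed
      also have "\<dots> = (K + F) * E ^ j" by (simp add: algebra_simps)
      also have "\<dots> \<le> Z * E ^ j"
      proof (rule mult_right_mono)
        show "K + F \<le> Z" using ZKF2 .
      qed (use Ej in simp)
      finally show ?thesis .
    next
      case 3
      have IH: "norm (g (Suc (Suc j))) \<le> Z * E ^ Suc (Suc j)"
        using less.hyps[of "Suc (Suc j)"] 3 by simp
      have ge: "g j = H j + c j * H (Suc j) + c j * c (Suc j) * g (Suc (Suc j))"
        using rec[of j] rec[of "Suc j"] 3 by (simp add: algebra_simps)
      have "norm (g j) \<le> norm (H j + c j * H (Suc j)) + norm (c j * c (Suc j) * g (Suc (Suc j)))"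
        unfolding ge by (rule norm_triangle_ineq)
      also have "\<dots> \<le> norm (H j) + norm (c j * H (Suc j)) + norm (c j * c (Suc j) * g (Suc (Suc j)))"
        using norm_triangle_ineq by simp
      also have "\<dots> = norm (H j) + norm (c j) * norm (H (Suc j))
            + (norm (c j) * norm (c (Suc j))) * norm (g (Suc (Suc j)))"
        by (simp add: norm_mult)
      also have "\<dots> \<le> K * E ^ j + 1 * (K * E ^ Suc j) + q * (Z * E ^ Suc (Suc j))"
        using Hb[of j] Hb[of "Suc j"] c1[of j] pair[of j] IH 3 pos
        by (intro add_mono mult_mono) auto
      also have "\<dots> = E ^ j * (K * (1 + E) + (q * E^2) * Z)"
        by (simp add: algebra_simps power2_eq_square)
      also have "\<dots> \<le> E ^ j * (K * (1 + E) + \<rho> * Z)"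
      proof -
        have "(q * E^2) * Z \<le> \<rho> * Z" using pos Z0 by (intro mult_right_mono) auto
        then show ?thesis using Ej by (intro mult_left_mono) auto
      qed
      also have "\<dots> \<le> E ^ j * Z" using Z1 pos Ej
        by (intro mult_left_mono) (auto simp: algebra_simps)
      finally show ?thesis by (simp add: mult_ac)
    qed
  qed
  show "j \<le> n \<Longrightarrow> norm (g j) \<le> (K * (1 + E) + F) / (1 - \<rho>) * E ^ j"
    using main by (simp add: Z_def)
qed

lemma chain_diff:
  fixes g1 g2 H1 H2 c1 c2 :: "nat \<Rightarrow> complex"
  assumes rec1: "\<And>j. j < N \<Longrightarrow> g1 j = H1 j + c1 j * g1 (Suc j)"
    and rec2: "\<And>j. j < N \<Longrightarrow> g2 j = H2 j + c2 j * g2 (Suc j)"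
    and W: "\<And>j. j \<le> N \<Longrightarrow> norm (prod c1 {..<j}) \<le> w * s ^ j"
    and Hd: "\<And>j. j < N \<Longrightarrow> norm (H1 j - H2 j) \<le> \<eta>"
    and cd: "\<And>j. j < N \<Longrightarrow> norm (c1 j - c2 j) \<le> \<Lambda>"
    and g1b: "\<And>j. j \<le> N \<Longrightarrow> norm (g1 j) \<le> Z * E ^ j"
    and g2b: "\<And>j. j \<le> N \<Longrightarrow> norm (g2 j) \<le> Z * E ^ j"
    and pos: "0 \<le> s" "s < 1" "s * E \<le> 1" "w \<ge> 0" "E \<ge> 1" "\<eta> \<ge> 0" "\<Lambda> \<ge> 0" "Z \<ge> 0"
  shows "norm (g1 0 - g2 0) \<le> w * (\<eta> / (1 - s) + N * \<Lambda> * Z * E) + w * (s * E) ^ N * (2 * Z)"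
proof -
  define D where "D j = g1 j - g2 j" for j
  have tel: "D 0 = (\<Sum>j<N. prod c1 {..<j} * (D j - c1 j * D (Suc j))) + prod c1 {..<N} * D N"
    by (rule telescope)
  have tm: "norm (prod c1 {..<j} * (D j - c1 j * D (Suc j))) \<le> w * \<eta> * s ^ j + w * \<Lambda> * Z * E"
    if j: "j < N" for j
  proof -
    have "D j - c1 j * D (Suc j) = (H1 j - H2 j) + (c1 j - c2 j) * g2 (Suc j)"
      using rec1[OF j] rec2[OF j] by (simp add: D_def algebra_simps)
    then have "norm (D j - c1 j * D (Suc j)) \<le> \<eta> + \<Lambda> * (Z * E ^ Suc j)"
      using Hd[OF j] cd[OF j] g2b[of "Suc j"] j pos
      by (auto simp: norm_mult intro!: order.trans[OF norm_triangle_ineq] add_mono mult_mono)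
    then have "norm (prod c1 {..<j} * (D j - c1 j * D (Suc j))) \<le> (w * s ^ j) * (\<eta> + \<Lambda> * (Z * E ^ Suc j))"
      using W[of j] j pos by (auto simp: norm_mult intro!: mult_mono)
    also have "\<dots> = w * \<eta> * s ^ j + w * \<Lambda> * Z * E * (s * E) ^ j"
      by (simp add: algebra_simps power_mult_distrib)
    also have "\<dots> \<le> w * \<eta> * s ^ j + w * \<Lambda> * Z * E * 1"
      using pos by (intro add_left_mono mult_left_mono power_le_one) auto
    finally show ?thesis by simp
  qed
  have "norm (D 0) \<le> (\<Sum>j<N. w * \<eta> * s ^ j + w * \<Lambda> * Z * E) + norm (prod c1 {..<N} * D N)"
  proof -
    have "norm (D 0) \<le> norm (\<Sum>j<N. prod c1 {..<j} * (D j - c1 j * D (Suc j))) + norm (prod c1 {..<N} * D N)"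
      unfolding tel by (rule norm_triangle_ineq)
    also have "norm (\<Sum>j<N. prod c1 {..<j} * (D j - c1 j * D (Suc j))) \<le> (\<Sum>j<N. norm (prod c1 {..<j} * (D j - c1 j * D (Suc j))))"
      by (rule norm_sum)
    also have "\<dots> \<le> (\<Sum>j<N. w * \<eta> * s ^ j + w * \<Lambda> * Z * E)"
      by (rule sum_mono) (simp add: tm)
    finally show ?thesis by simp
  qed
  also have "(\<Sum>j<N. w * \<eta> * s ^ j + w * \<Lambda> * Z * E) = w * \<eta> * (\<Sum>j<N. s ^ j) + N * (w * \<Lambda> * Z * E)"
    by (simp add: sum.distrib sum_distrib_left)
  also have "(\<Sum>j<N. s ^ j) \<le> 1 / (1 - s)"
  proof -
    have "(\<Sum>j<N. s ^ j) = (1 - s ^ N) / (1 - s)" using pos by (simp add: sum_gp_strict)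
    also have "\<dots> \<le> 1 / (1 - s)" using pos by (intro divide_right_mono) auto
    finally show ?thesis .
  qed
  also have "norm (prod c1 {..<N} * D N) \<le> (w * s ^ N) * (2 * Z * E ^ N)"
  proof -
    have "norm (g1 N) \<le> Z * E ^ N" "norm (g2 N) \<le> Z * E ^ N" using g1b g2b by auto
    then have "norm (D N) \<le> 2 * Z * E ^ N" using norm_triangle_ineq4[of "g1 N" "g2 N"] unfolding D_def
      by linarith
    then show ?thesis using W[of N] pos by (auto simp: norm_mult intro!: mult_mono)
  qed
  finally have "norm (D 0) \<le> w * \<eta> * (1 / (1 - s)) + N * (w * \<Lambda> * Z * E) + (w * s ^ N) * (2 * Z * E ^ N)"
    using pos by (simp add: mult_left_mono)
  then show ?thesis by (simp add: D_def algebra_simps power_mult_distrib)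
qed

definition Lb :: "real \<Rightarrow> nat \<Rightarrow> real" where
  "Lb B i = max B (real i * (ln (real i))^2)"

lemma Lb_mono: "i \<le> i' \<Longrightarrow> Lb B i \<le> Lb B i'"
proof -
  assume a: "i \<le> i'"
  have "real i * (ln (real i))^2 \<le> real i' * (ln (real i'))^2"
  proof (cases "i = 0")
    case False
    then have "0 \<le> ln (real i)" "ln (real i) \<le> ln (real i')" using a by auto
    then have "(ln (real i))^2 \<le> (ln (real i'))^2" by (simp add: power_mono)
    then show ?thesis using a by (intro mult_mono) auto
  qed simp
  then show ?thesis unfolding Lb_def by linarith
qed

lemma Lb_nonneg: "B \<ge> 0 \<Longrightarrow> Lb B i \<ge> 0"
  unfolding Lb_def by simp

lemma lower_aux:
  assumes "B \<ge> 0" "t \<ge> 1 / (d + 1)" "d \<le> Lb B i" "i \<le> i'" "d \<ge> 1"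
  shows "t \<ge> 1 / (2 * Lb B i' + 2)"
proof -
  have "Lb B i \<le> Lb B i'" using Lb_mono assms by simp
  then have "d + 1 \<le> 2 * Lb B i' + 2" using assms Lb_nonneg[of B i'] by linarith
  then have "1 / (2 * Lb B i' + 2) \<le> 1 / (d + 1)" using assms by (intro divide_left_mono) auto
  then show ?thesis using assms by linarith
qed

locale L =
  fixes k :: complex and \<delta> :: real and f h :: "real \<Rightarrow> complex"
  assumes kneg: "Re k < 0" and dpos: "\<delta> > 0"
    and per: "\<And>x. x \<in> \<rat> \<Longrightarrow> x \<notin> {-1..0} \<Longrightarrow> f x = f (x + 1)"
    and hdef: "\<And>x. x \<in> \<rat> \<Longrightarrow> x \<noteq> 0 \<Longrightarrow> \<bar>x\<bar> \<le> 1 \<Longrightarrow>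
           h x = f x - complex_of_real \<bar>x\<bar> powr (- k) * f (-1 / x)"
    and hcont: "\<And>\<eta>. \<eta> > 0 \<Longrightarrow> \<forall>\<^sub>F \<epsilon> in at_right 0. \<forall>x y. x \<noteq> 0 \<and> y \<noteq> 0 \<and>
           \<bar>x - y\<bar> < exp (- (\<epsilon> powr (\<delta> - 1))) \<and> \<bar>x\<bar> > 2 * \<epsilon> \<longrightarrow> norm (h x - h y) \<le> \<eta>"
    and hgrow: "\<exists>C. \<forall>x. x \<noteq> 0 \<and> \<bar>x\<bar> \<le> 1 \<longrightarrow> norm (h x) \<le> C * exp (\<bar>x\<bar> powr (\<delta> - 1))"
begin

lemma hdef': "x \<in> \<rat> \<Longrightarrow> x \<noteq> 0 \<Longrightarrow> \<bar>x\<bar> \<le> 1 \<Longrightarrow> f x = h x + cp k \<bar>x\<bar> * f (-1 / x)"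
  using hdef[of x] by (simp add: cp_def)

lemma F1: "y \<in> \<rat> \<Longrightarrow> y > 0 \<Longrightarrow> f (y + real n) = f y"
proof (induction n)
  case (Suc n)
  have "f (y + real n) = f (y + real n + 1)" using Suc.prems by (intro per) auto
  moreover have "y + real n + 1 = y + real (Suc n)" by simp
  ultimately show ?case using Suc by simp
qed simp

lemma F2: "n \<ge> 1 \<Longrightarrow> f (real n) = f 1"
proof (induction n rule: dec_induct)
  case (step n)
  have "f (real n) = f (real n + 1)" using step by (intro per) auto
  moreover have "real n + 1 = real (Suc n)" by simp
  ultimately show ?case using step by simp
qed simp

lemma F3: "y \<in> \<rat> \<Longrightarrow> y > 0 \<Longrightarrow> f (- y - real n) = f (- y)"
proof (induction n)
  case (Suc n)
  have "f (- y - real (Suc n)) = f (- y - real (Suc n) + 1)" using Suc.prems by (intro per) auto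
  moreover have "- y - real (Suc n) + 1 = - y - real n" by simp
  ultimately show ?case using Suc by simp
qed simp

lemma F4: "n \<ge> 1 \<Longrightarrow> f (- real n) = f (-1)"
proof (induction n rule: dec_induct)
  case (step n)
  have "f (- real (Suc n)) = f (- real (Suc n) + 1)" using step by (intro per) auto
  moreover have "- real (Suc n) + 1 = - real n" by simp
  ultimately show ?case using step by simp
qed simp

lemma F_shift:
  fixes b :: int and t :: real
  assumes "t \<in> \<rat>" "0 \<le> t" "b \<ge> 1"
  shows "f (real_of_int b + t) = (if t = 0 then f 1 else f t)"
    and "f (- (real_of_int b + t)) = (if t = 0 then f (-1) else f (- t))"
proof -
  have bn: "real (nat b) = real_of_int b" using assms by simp
  have nb: "nat b \<ge> 1" using assms by simp
  have e1: "real_of_int b + t = t + real (nat b)" using bn by simp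
  have e2: "- (real_of_int b + t) = - t - real (nat b)" using bn by simp
  show "f (real_of_int b + t) = (if t = 0 then f 1 else f t)"
    unfolding e1 using F1[of t "nat b"] F2[OF nb] assms by auto
  show "f (- (real_of_int b + t)) = (if t = 0 then f (-1) else f (- t))"
    unfolding e2 using F3[of t "nat b"] F4[OF nb] assms by auto
qed

definition G :: "real \<Rightarrow> nat \<Rightarrow> complex" where
  "G x j = (if cf_rem x j = 0 then f ((-1)^j) else f ((-1)^j * cf_rem x j))"

lemma Grec:
  assumes x: "x \<in> \<rat>" and nz: "cf_rem x j \<noteq> 0"
  shows "G x j = h ((-1)^j * cf_rem x j) + cp k (cf_rem x j) * G x (Suc j)"
proof -
  define t where "t = cf_rem x j"
  define b where "b = cf_digit (Suc j) x"
  define t' where "t' = cf_rem x (Suc j)"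
  have t: "0 < t" "t < 1" using rem_range[of x j] nz by (auto simp: t_def)
  have b: "b \<ge> 1" using digit_ge1[OF nz] by (simp add: b_def)
  have t': "0 \<le> t'" "t' \<in> \<rat>" using rem_range rem_rat[OF x] by (auto simp: t'_def)
  have teq: "t = 1 / (b + t')" using rem_eq[OF nz] by (simp add: t_def b_def t'_def)
  define X where "X = (-1)^j * t"
  have X: "X \<in> \<rat>" "X \<noteq> 0" "\<bar>X\<bar> = t" "\<bar>X\<bar> \<le> 1"
    using rem_rat[OF x, of j] t by (auto simp: X_def t_def abs_mult)
  have fX: "f X = h X + cp k t * f (-1 / X)" using hdef'[OF X(1,2,4)] X(3) by simp
  have inv: "-1 / X = (-1)^(Suc j) * (b + t')"
  proof -
    have "1 / X = (-1)^j * (1 / t)" by (cases "even j") (auto simp: X_def)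
    then have "-1 / X = - ((-1)^j * (1 / t))" by (metis minus_divide_left)
    also have "1 / t = b + t'" using teq t b t' by (simp add: field_simps)
    finally show ?thesis by simp
  qed
  have fG: "f (-1 / X) = G x (Suc j)"
  proof (cases "even (Suc j)")
    case True
    then have "-1 / X = b + t'" using inv by simp
    then show ?thesis using F_shift(1)[OF t'(2,1) b] True by (simp add: G_def t'_def)
  next
    case False
    then have "-1 / X = - (b + t')" using inv by simp
    then show ?thesis using F_shift(2)[OF t'(2,1) b] False by (simp add: G_def t'_def)
  qed
  show ?thesis using fX fG nz by (simp add: G_def X_def t_def)
qed

definition chain :: "(nat \<Rightarrow> real) \<Rightarrow> (nat \<Rightarrow> real) \<Rightarrow> (nat \<Rightarrow> complex) \<Rightarrow> nat \<Rightarrow> real \<Rightarrow> bool" where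
  "chain u s g n B \<longleftrightarrow>
     (\<forall>j<n. 0 < u j \<and> u j \<le> 1 \<and> \<bar>s j\<bar> = 1 \<and> g j = h (s j * u j) + cp k (u j) * g (Suc j)
        \<and> u j \<ge> 1 / (2 * Lb B (j + 2) + 2)) \<and>
     (\<forall>j. Suc j < n \<longrightarrow> u j * u (Suc j) \<le> 1/2) \<and>
     norm (g n) \<le> norm (f 1) + norm (f (-1))"

lemma G_end: "cf_rem x r = 0 \<Longrightarrow> norm (G x r) \<le> norm (f 1) + norm (f (-1))"
  by (cases "even r") (auto simp: G_def)

lemma chain_pos:
  assumes x: "x \<in> \<rat>" "x \<in> cfT B" and B: "B \<ge> 0"
    and r: "cf_len x = enat r" "cf_rem x r = 0" "\<And>j. j < r \<Longrightarrow> cf_rem x j \<noteq> 0"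
  shows "chain (cf_rem x) (\<lambda>j. (-1)^j) (G x) r B"
  unfolding chain_def
proof (intro conjI allI impI)
  fix j assume j: "j < r"
  have nz: "cf_rem x j \<noteq> 0" using r j by auto
  show "0 < cf_rem x j" "cf_rem x j \<le> 1" using rem_range[of x j] nz by auto
  show "\<bar>(-1::real)^j\<bar> = 1" by simp
  show "G x j = h ((-1)^j * cf_rem x j) + cp k (cf_rem x j) * G x (Suc j)"
    by (rule Grec[OF x(1) nz])
  have d: "real_of_int (cf_digit (Suc j) x) \<le> Lb B (Suc j)"
    using cfT_digit[OF x(2), of "Suc j"] r j by (simp add: Lb_def)
  show "1 / (2 * Lb B (j + 2) + 2) \<le> cf_rem x j"
    using lower_aux[OF B _ d, of "cf_rem x j" "j+2"] rem_lower[OF nz] digit_ge1[OF nz] by simp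
next
  fix j show "cf_rem x j * cf_rem x (Suc j) \<le> 1/2" by (rule rem_pair)
next
  show "norm (G x r) \<le> norm (f 1) + norm (f (-1))" by (rule G_end[OF r(2)])
qed

lemma f_pos:
  assumes "x \<in> \<rat>" "\<lfloor>x\<rfloor> \<ge> 0" "cf_rem x 0 \<noteq> 0"
  shows "f x = G x 0"
proof -
  have x: "x = frac x + real (nat \<lfloor>x\<rfloor>)" using assms by (simp add: frac_def)
  have "frac x \<in> \<rat>" using assms by (auto simp: frac_def)
  moreover have "frac x > 0" using assms frac_ge_0[of x] by (auto simp: order.order_iff_strict)
  ultimately have "f (frac x + real (nat \<lfloor>x\<rfloor>)) = f (frac x)" by (rule F1)
  then show ?thesis using assms x by (simp add: G_def)
qed

end

context L begin

lemma f_neg: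
  assumes "x \<in> \<rat>" "\<lfloor>x\<rfloor> < 0" "cf_rem x 0 \<noteq> 0"
  shows "f x = f (cf_rem x 0 - 1)"
proof -
  define y where "y = 1 - frac x"
  define p where "p = nat (- \<lfloor>x\<rfloor> - 1)"
  have y: "y \<in> \<rat>" "y > 0" using assms frac_lt_1[of x] by (auto simp: y_def frac_def)
  have x: "x = - y - real p" using assms by (simp add: y_def p_def frac_def)
  have "f x = f (- y)" using F3[OF y, of p] x by simp
  moreover have "- y = cf_rem x 0 - 1" by (simp add: y_def)
  ultimately show ?thesis by simp
qed

lemma chain_neg1:
  assumes x: "x \<in> \<rat>" "x \<in> cfT B" and B: "B \<ge> 0"
    and r: "cf_len x = enat r" "cf_rem x r = 0" "\<And>j. j < r \<Longrightarrow> cf_rem x j \<noteq> 0"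
    and r1: "r \<ge> 1" and b1: "cf_digit 1 x = 1"
  shows "r \<ge> 2 \<and> chain (\<lambda>j. if j = 0 then 1 - cf_rem x 0 else cf_rem x (Suc j)) (\<lambda>j. (-1)^Suc j)
     (\<lambda>j. if j = 0 then f (cf_rem x 0 - 1) else G x (Suc j)) (r - 1) B"
proof -
  define t where "t = cf_rem x"
  define d where "d i = real_of_int (cf_digit i x)" for i
  have nz0: "t 0 \<noteq> 0" unfolding t_def by (rule r(3)) (use r1 in simp)
  have t0eq: "t 0 = 1 / (1 + t 1)" using rem_eq[of x 0] nz0 b1 by (simp add: t_def)
  have t1: "t 1 \<noteq> 0"
  proof
    assume "t 1 = 0" then have "t 0 = 1" using t0eq by simp
    then show False using rem_range[of x 0] by (simp add: t_def)
  qed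
  have r2: "r \<ge> 2"
  proof (rule ccontr)
    assume "\<not> r \<ge> 2" then have "r = 1" using r1 by simp
    then show False using t1 r(2) by (simp add: t_def)
  qed
  have trange: "0 \<le> t i" "t i < 1" for i using rem_range[of x i] by (auto simp: t_def)
  have tpos: "i < r \<Longrightarrow> 0 < t i" for i using r(3)[of i] trange[of i] by (auto simp: t_def)
  have teq: "i < r \<Longrightarrow> t i = 1 / (d (Suc i) + t (Suc i))" for i
    unfolding t_def d_def by (rule rem_eq) (rule r(3))
  have dge: "i < r \<Longrightarrow> d (Suc i) \<ge> 1" for i using digit_ge1 r(3) by (simp add: d_def)
  have trat: "t i \<in> \<rat>" for i using rem_rat[OF x(1)] by (simp add: t_def)
  have dle: "1 \<le> i \<Longrightarrow> i \<le> r \<Longrightarrow> d i \<le> Lb B i" for i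
    using cfT_digit[OF x(2), of i] r(1) by (simp add: d_def Lb_def)
  have tlow: "i < r \<Longrightarrow> t i \<ge> 1 / (d (Suc i) + 1)" for i
    using rem_lower[of x i] r(3) by (simp add: t_def d_def)
  have om: "1 - t 0 = t 1 / (1 + t 1)" using t0eq tpos[of 1] r2 by (simp add: field_simps)
  show ?thesis
    unfolding chain_def
  proof (intro conjI allI impI r2)
    fix j assume j: "j < r - 1"
    define u where "u j = (if j = 0 then 1 - cf_rem x 0 else cf_rem x (Suc j))" for j
    show "0 < (if j = 0 then 1 - cf_rem x 0 else cf_rem x (Suc j))"
      using tpos[of "Suc j"] j trange[of 0] by (auto simp: t_def)
    show "(if j = 0 then 1 - cf_rem x 0 else cf_rem x (Suc j)) \<le> 1"
      using tpos[of 0] trange[of "Suc j"] r2 by (auto simp: t_def)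
    show "\<bar>(-1::real) ^ Suc j\<bar> = 1" by simp
    show "(if j = 0 then f (cf_rem x 0 - 1) else G x (Suc j)) =
      h ((-1) ^ Suc j * (if j = 0 then 1 - cf_rem x 0 else cf_rem x (Suc j))) +
      cp k (if j = 0 then 1 - cf_rem x 0 else cf_rem x (Suc j)) *
      (if Suc j = 0 then f (cf_rem x 0 - 1) else G x (Suc (Suc j)))"
    proof (cases "j = 0")
      case True
      define X where "X = t 0 - 1"
      have X: "X \<in> \<rat>" "X \<noteq> 0" "\<bar>X\<bar> \<le> 1" "\<bar>X\<bar> = 1 - t 0"
        using trat[of 0] trange[of 0] tpos[of 0] r2 by (auto simp: X_def)
      have "-1 / X = 1 / (1 - t 0)" unfolding X_def by (metis minus_diff_eq minus_divide_right minus_divide_left)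
      also have "\<dots> = (1 + t 1) / t 1" unfolding om by simp
      also have "\<dots> = 1 + 1 / t 1" using t1 by (simp add: field_simps)
      also have "1 / t 1 = d 2 + t 2"
      proof -
        have e: "t 1 = 1 / (d 2 + t 2)" using teq[of 1] r2 by (simp add: numeral_2_eq_2)
        show ?thesis unfolding e by simp
      qed
      finally have inv: "-1 / X = real_of_int (cf_digit 2 x + 1) + t 2" by (simp add: d_def)
      have "f (-1 / X) = G x 2"
        unfolding inv using F_shift(1)[OF trat[of 2] trange(1)[of 2], of "cf_digit 2 x + 1"]
          dge[of 1] r2 by (simp add: G_def t_def d_def numeral_2_eq_2)
      then show ?thesis using hdef'[OF X(1-3)] X(4) True by (simp add: X_def t_def numeral_2_eq_2)
    next
      case False
      have nz: "cf_rem x (Suc j) \<noteq> 0" using r(3) j by simp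
      show ?thesis using Grec[OF x(1) nz] False by simp
    qed
    show "1 / (2 * Lb B (j + 2) + 2) \<le> (if j = 0 then 1 - cf_rem x 0 else cf_rem x (Suc j))"
    proof (cases "j = 0")
      case True
      have "t 1 / 2 \<le> 1 - t 0" unfolding om using tpos[of 1] trange[of 1] r2
        by (simp add: field_simps)
      moreover have "1 / (d 2 + 1) \<le> t 1" using tlow[of 1] r2 by (simp add: numeral_2_eq_2)
      moreover have "d 2 \<le> Lb B 2" using dle[of 2] r2 by simp
      moreover have "d 2 \<ge> 1" using dge[of 1] r2 by (simp add: numeral_2_eq_2)
      ultimately have "1 / (2 * Lb B 2 + 2) \<le> 1 - t 0"
      proof -
        assume a: "t 1 / 2 \<le> 1 - t 0" "1 / (d 2 + 1) \<le> t 1" "d 2 \<le> Lb B 2" "d 2 \<ge> 1"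
        have "1 / (2 * Lb B 2 + 2) \<le> 1 / (2 * (d 2 + 1))"
          using a by (intro divide_left_mono) auto
        also have "\<dots> = (1 / (d 2 + 1)) / 2" by simp
        also have "\<dots> \<le> t 1 / 2" by (rule divide_right_mono[OF a(2)]) simp
        finally show ?thesis using a by linarith
      qed
      moreover have jj: "j + 2 = 2" using True by simp
      ultimately show ?thesis using True unfolding jj by (simp add: t_def)
    next
      case False
      have "1 / (2 * Lb B (j + 2) + 2) \<le> t (Suc j)"
        using lower_aux[OF B tlow[of "Suc j"] dle[of "Suc (Suc j)"], of "j+2"] dge[of "Suc j"] j by simp
      then show ?thesis using False by (simp add: t_def)
    qed
  next
    fix j assume j: "Suc j < r - 1"
    show "(if j = 0 then 1 - cf_rem x 0 else cf_rem x (Suc j)) *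
          (if Suc j = 0 then 1 - cf_rem x 0 else cf_rem x (Suc (Suc j))) \<le> 1/2"
    proof (cases "j = 0")
      case True
      have "1 - t 0 \<le> 1/2" unfolding om using trange[of 1] by (simp add: field_simps)
      moreover have "0 \<le> t 2" "t 2 \<le> 1" using trange[of 2] by auto
      moreover have "0 \<le> 1 - t 0" using trange[of 0] by simp
      ultimately have "(1 - t 0) * t 2 \<le> 1/2 * 1" by (intro mult_mono) auto
      then show ?thesis using True by (simp add: t_def numeral_2_eq_2)
    next
      case False then show ?thesis using rem_pair[of x "Suc j"] by simp
    qed
  next
    show "norm (if r - 1 = 0 then f (cf_rem x 0 - 1) else G x (Suc (r - 1))) \<le> norm (f 1) + norm (f (-1))"
      using G_end[OF r(2)] r2 by simp
  qed
qed


lemma chain_neg2: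
  assumes x: "x \<in> \<rat>" "x \<in> cfT B" and B: "B \<ge> 0"
    and r: "cf_len x = enat r" "cf_rem x r = 0" "\<And>j. j < r \<Longrightarrow> cf_rem x j \<noteq> 0"
    and r1: "r \<ge> 1" and b1: "cf_digit 1 x \<ge> 2"
  shows "chain (\<lambda>j. if j = 0 then 1 - cf_rem x 0 else if j = 1 then 1 / (real_of_int (cf_digit 1 x) - 1 + cf_rem x 1) else cf_rem x (j - 1))
     (\<lambda>j. (-1)^Suc j)
     (\<lambda>j. if j = 0 then f (cf_rem x 0 - 1) else if j = 1 then f (1 / (real_of_int (cf_digit 1 x) - 1 + cf_rem x 1)) else G x (j - 1)) (r + 1) B"
proof -
  define t where "t = cf_rem x"
  define d where "d i = real_of_int (cf_digit i x)" for i
  define u1 where "u1 = 1 / (d 1 - 1 + t 1)"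
  have nz0: "t 0 \<noteq> 0" unfolding t_def by (rule r(3)) (use r1 in simp)
  have trange: "0 \<le> t i" "t i < 1" for i using rem_range[of x i] by (auto simp: t_def)
  have tpos: "i < r \<Longrightarrow> 0 < t i" for i using r(3)[of i] trange[of i] by (auto simp: t_def)
  have teq: "i < r \<Longrightarrow> t i = 1 / (d (Suc i) + t (Suc i))" for i
    unfolding t_def d_def by (rule rem_eq) (rule r(3))
  have dge: "i < r \<Longrightarrow> d (Suc i) \<ge> 1" for i using digit_ge1 r(3) by (simp add: d_def)
  have trat: "t i \<in> \<rat>" for i using rem_rat[OF x(1)] by (simp add: t_def)
  have dle: "1 \<le> i \<Longrightarrow> i \<le> r \<Longrightarrow> d i \<le> Lb B i" for i
    using cfT_digit[OF x(2), of i] r(1) by (simp add: d_def Lb_def)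
  have tlow: "i < r \<Longrightarrow> t i \<ge> 1 / (d (Suc i) + 1)" for i
    using rem_lower[of x i] r(3) by (simp add: t_def d_def)
  have d1: "d 1 \<ge> 2" using b1 by (simp add: d_def)
  have t0eq: "t 0 = 1 / (d 1 + t 1)" using teq[of 0] r1 by simp
  have den: "d 1 - 1 + t 1 \<ge> 1" using d1 trange[of 1] by simp
  have u1: "0 < u1" "u1 \<le> 1" "u1 \<in> \<rat>" using den trat[of 1] by (auto simp: u1_def d_def)
  have t0half: "t 0 \<le> 1/2"
  proof -
    have "1 / (d 1 + t 1) \<le> 1 / 2" using d1 trange[of 1] by (intro divide_left_mono) auto
    then show ?thesis using t0eq by simp
  qed
  have inv0: "1 / (1 - t 0) = 1 + u1"
  proof -
    have "1 - t 0 = (d 1 - 1 + t 1) / (d 1 + t 1)" unfolding t0eq using d1 trange[of 1]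
      by (simp add: field_simps)
    then have "1 / (1 - t 0) = (d 1 + t 1) / (d 1 - 1 + t 1)" by simp
    also have "\<dots> = 1 + u1" unfolding u1_def using den by (simp add: field_simps)
    finally show ?thesis .
  qed
  define U where "U = (\<lambda>j. if j = 0 then 1 - t 0 else if j = 1 then u1 else t (j - 1))"
  define g where "g = (\<lambda>j. if j = 0 then f (t 0 - 1) else if j = 1 then f u1 else G x (j - 1))"
  define S where "S = (\<lambda>j::nat. (-1::real)^Suc j)"
  have U0: "U 0 = 1 - t 0" and U1: "U 1 = u1" and U2: "j \<ge> 2 \<Longrightarrow> U j = t (j - 1)" for j
    by (auto simp: U_def)
  have g0: "g 0 = f (t 0 - 1)" and g1: "g 1 = f u1" and g2: "j \<ge> 2 \<Longrightarrow> g j = G x (j - 1)" for j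
    by (auto simp: g_def)
  have S0: "S 0 = -1" and S1: "S 1 = 1" by (auto simp: S_def)
  have "chain U S g (r + 1) B"
    unfolding chain_def
  proof (intro conjI allI impI)
    fix j assume j: "j < r + 1"
    consider "j = 0" | "j = 1" | "j \<ge> 2" by linarith
    then have "0 < U j \<and> U j \<le> 1"
    proof cases
      case 1 then show ?thesis using trange[of 0] tpos[of 0] r1 U0 by auto
    next
      case 2 then show ?thesis using u1 U1 by auto
    next
      case 3 then show ?thesis using tpos[of "j - 1"] trange[of "j - 1"] j U2[OF 3] by auto
    qed
    then show "0 < U j" "U j \<le> 1" by auto
    show "\<bar>S j\<bar> = 1" by (simp add: S_def)
    show "g j = h (S j * U j) + cp k (U j) * g (Suc j)"
    proof -
      consider "j = 0" | "j = 1" | "j \<ge> 2" by linarith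
      then show ?thesis
      proof cases
        case 1
        define X where "X = t 0 - 1"
        have X: "X \<in> \<rat>" "X \<noteq> 0" "\<bar>X\<bar> \<le> 1" "\<bar>X\<bar> = 1 - t 0"
          using trat[of 0] trange[of 0] tpos[of 0] r1 by (auto simp: X_def)
        have "-1 / X = 1 / (1 - t 0)" unfolding X_def by (metis minus_diff_eq minus_divide_right minus_divide_left)
        then have inv: "-1 / X = u1 + 1" using inv0 by simp
        have "f (-1 / X) = f u1" unfolding inv using per[of u1] u1 by simp
        moreover have "S 0 * U 0 = X" using S0 U0 by (simp add: X_def)
        ultimately show ?thesis using hdef'[OF X(1-3)] X(4) 1 g0 g1 U0 by (simp add: X_def)
      next
        case 2
        have X: "u1 \<noteq> 0" "\<bar>u1\<bar> \<le> 1" "\<bar>u1\<bar> = u1" using u1 by auto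
        have "-1 / u1 = - (real_of_int (cf_digit 1 x - 1) + t 1)" by (simp add: u1_def d_def)
        moreover have "cf_digit 1 x - 1 \<ge> 1" using b1 by simp
        ultimately have "f (-1 / u1) = G x 1"
          using F_shift(2)[OF trat[of 1] trange(1)[of 1], of "cf_digit 1 x - 1"] by (simp add: G_def t_def)
        then show ?thesis using hdef'[OF u1(3) X(1,2)] X(3) 2 g1 g2[of "Suc (Suc 0)"] U1 S1 by simp
      next
        case 3
        have nz: "cf_rem x (j - 1) \<noteq> 0" using r(3) j 3 by simp
        have jj: "Suc (j - 1) = j" using 3 by simp
        have s: "S j = (-1) ^ (j - 1)"
        proof -
          have "Suc j = (j - 1) + 2" using 3 by simp
          then have "(-1::real) ^ Suc j = (-1) ^ (j - 1) * (-1)^2" by (metis power_add)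
          then show ?thesis by (simp add: S_def)
        qed
        show ?thesis using Grec[OF x(1) nz] s jj g2[OF 3] g2[of "Suc j"] U2[OF 3] 3 by (simp add: t_def)
      qed
    qed
    show "1 / (2 * Lb B (j + 2) + 2) \<le> U j"
    proof -
      have L0: "Lb B (j + 2) \<ge> 0" by (rule Lb_nonneg[OF B])
      consider "j = 0" | "j = 1" | "j \<ge> 2" by linarith
      then show ?thesis
      proof cases
        case 1
        have "1 / (2 * Lb B (j + 2) + 2) \<le> 1 / 2" using L0 by (intro divide_left_mono) auto
        also have "1 / 2 \<le> 1 - t 0" using t0half by simp
        finally show ?thesis using 1 U0 by simp
      next
        case 2
        have "u1 \<ge> 1 / (d 1 + 1)" unfolding u1_def using trange[of 1] d1 by (intro divide_left_mono) auto
        then have "1 / (2 * Lb B (j + 2) + 2) \<le> u1"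
          using lower_aux[OF B _ dle[of 1], of u1 "j+2"] d1 r1 by simp
        then show ?thesis using 2 U1 by simp
      next
        case 3
        have "1 / (2 * Lb B (j + 2) + 2) \<le> t (j - 1)"
          using lower_aux[OF B tlow[of "j - 1"] dle[of "Suc (j - 1)"], of "j+2"] dge[of "j - 1"] j 3 by simp
        then show ?thesis using U2[OF 3] by simp
      qed
    qed
  next
    fix j assume j: "Suc j < r + 1"
    show "U j * U (Suc j) \<le> 1/2"
    proof -
      consider "j = 0" | "j = 1" | "j \<ge> 2" by linarith
      then show ?thesis
      proof cases
        case 1
        have "(1 - t 0) * u1 = t 0"
        proof -
          have "1 - t 0 = 1 / (1 / (1 - t 0))" by simp
          also have "\<dots> = 1 / (1 + u1)" using inv0 by simp
          finally have "1 - t 0 = 1 / (1 + u1)" .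
          then have "(1 - t 0) * u1 = u1 / (1 + u1)" by simp
          also have "\<dots> = 1 / (1 / u1 + 1)" using u1 by (simp add: field_simps)
          also have "1 / u1 = d 1 - 1 + t 1" by (simp add: u1_def)
          also have "1 / (d 1 - 1 + t 1 + 1) = t 0" using t0eq by simp
          finally show ?thesis .
        qed
        then show ?thesis using 1 t0half U0 U1 by simp
      next
        case 2
        have "u1 * t 1 = t 1 / (d 1 - 1 + t 1)" by (simp add: u1_def)
        also have "\<dots> \<le> t 1 / (1 + t 1)" using d1 trange[of 1] by (intro divide_left_mono) auto
        also have "\<dots> \<le> 1/2" using trange[of 1] by (simp add: field_simps)
        finally show ?thesis using 2 U1 U2[of "Suc (Suc 0)"] by simp
      next
        case 3
        have "Suc j - 1 = Suc (j - 1)" using 3 by simp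
        then show ?thesis using rem_pair[of x "j - 1"] 3 U2[OF 3] U2[of "Suc j"] by (simp add: t_def)
      qed
    qed
  next
    show "norm (g (r + 1)) \<le> norm (f 1) + norm (f (-1))"
      using G_end[OF r(2)] r1 g2[of "r+1"] by simp
  qed
  then show ?thesis unfolding U_def S_def g_def u1_def d_def t_def .
qed
end

lemma inv_diff_le:
  fixes c a b :: real
  assumes "c \<ge> 1" "a \<ge> 0" "b \<ge> 0"
  shows "\<bar>1 / (c + a) - 1 / (c + b)\<bar> \<le> \<bar>a - b\<bar>"
proof -
  have p: "c + a \<ge> 1" "c + b \<ge> 1" using assms by auto
  have "1 / (c + a) - 1 / (c + b) = (b - a) / ((c + a) * (c + b))" using p by (simp add: field_simps)
  then have "\<bar>1 / (c + a) - 1 / (c + b)\<bar> = \<bar>a - b\<bar> / ((c + a) * (c + b))"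
    using p by (simp add: abs_minus_commute)
  also have "\<dots> \<le> \<bar>a - b\<bar> / 1"
  proof -
    have "1 * 1 \<le> (c + a) * (c + b)" using p by (intro mult_mono) auto
    then show ?thesis by (intro divide_left_mono) auto
  qed
  finally show ?thesis by simp
qed

lemma pow_mono_idx: "i \<le> Suc j \<Longrightarrow> Suc j \<le> m \<Longrightarrow>
   sqrt (1/2::real) ^ (m - i) / sqrt (1/2) \<le> sqrt (1/2) ^ (m - Suc j) / sqrt (1/2)"
  by (intro divide_right_mono power_decreasing) auto

context L begin

lemma two_chains:
  assumes x1: "x1 \<in> \<rat>" "x1 \<in> cfT B" and x2: "x2 \<in> \<rat>" "x2 \<in> cfT B" and B: "B \<ge> 0"
    and m: "m \<ge> 2" "enat m \<le> cf_len x1" "enat m \<le> cf_len x2"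
    and dig: "\<And>j. j \<le> m \<Longrightarrow> cf_digit j x1 = cf_digit j x2"
  shows "\<exists>u1 u2 S g1 g2 n1 n2. chain u1 S g1 n1 B \<and> chain u2 S g2 n2 B \<and> f x1 = g1 0 \<and> f x2 = g2 0
     \<and> n1 \<ge> m - 1 \<and> n2 \<ge> m - 1
     \<and> (\<forall>j. Suc j \<le> m \<longrightarrow> \<bar>u1 j - u2 j\<bar> \<le> sqrt (1/2) ^ (m - Suc j) / sqrt (1/2))"
proof -
  obtain r1 where r1: "cf_len x1 = enat r1" "cf_rem x1 r1 = 0" "\<And>j. j < r1 \<Longrightarrow> cf_rem x1 j \<noteq> 0"
    using len_rat[OF x1(1)] by blast
  obtain r2 where r2: "cf_len x2 = enat r2" "cf_rem x2 r2 = 0" "\<And>j. j < r2 \<Longrightarrow> cf_rem x2 j \<noteq> 0"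
    using len_rat[OF x2(1)] by blast
  have mr1: "m \<le> r1" using m r1 by simp
  have mr2: "m \<le> r2" using m r2 by simp
  have nz: "\<And>j. j < m \<Longrightarrow> cf_rem x1 j \<noteq> 0 \<and> cf_rem x2 j \<noteq> 0" using r1 r2 mr1 mr2 by auto
  have cl: "i \<le> m \<Longrightarrow> \<bar>cf_rem x1 i - cf_rem x2 i\<bar> \<le> sqrt (1/2) ^ (m - i) / sqrt (1/2)" for i
    by (rule close[OF _ nz]) (use dig in auto)
  have cl': "i \<le> Suc j \<Longrightarrow> Suc j \<le> m \<Longrightarrow> \<bar>cf_rem x1 i - cf_rem x2 i\<bar> \<le> sqrt (1/2) ^ (m - Suc j) / sqrt (1/2)" for i j
    using cl[of i] pow_mono_idx[of i j m] by linarith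
  have nz10: "cf_rem x1 0 \<noteq> 0" "cf_rem x2 0 \<noteq> 0" using nz[of 0] m by auto
  have fl: "\<lfloor>x1\<rfloor> = \<lfloor>x2\<rfloor>" using dig[of 0] by simp
  have d1: "cf_digit 1 x1 = cf_digit 1 x2" using dig[of 1] m by simp
  have d1ge: "cf_digit 1 x1 \<ge> 1" using digit_ge1[OF nz10(1)] by simp
  have r1ge: "r1 \<ge> 1" "r2 \<ge> 1" using mr1 mr2 m by auto
  consider "\<lfloor>x1\<rfloor> \<ge> 0" | "\<lfloor>x1\<rfloor> < 0" "cf_digit 1 x1 = 1" | "\<lfloor>x1\<rfloor> < 0" "cf_digit 1 x1 \<ge> 2"
    using d1ge by linarith
  then show ?thesis
  proof cases
    case 1
    show ?thesis
      apply (rule exI[of _ "cf_rem x1"], rule exI[of _ "cf_rem x2"], rule exI[of _ "\<lambda>j. (-1)^j"])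
      apply (rule exI[of _ "G x1"], rule exI[of _ "G x2"], rule exI[of _ r1], rule exI[of _ r2])
      using chain_pos[OF x1 B r1] chain_pos[OF x2 B r2] f_pos[OF x1(1) _ nz10(1)] f_pos[OF x2(1) _ nz10(2)]
        1 fl mr1 mr2 cl' by auto
  next
    case 2
    have d2: "cf_digit 1 x2 = 1" using 2 d1 by simp
    note c1 = chain_neg1[OF x1 B r1 r1ge(1) 2(2)]
    note c2 = chain_neg1[OF x2 B r2 r1ge(2) d2]
    have clu: "\<bar>(if j = 0 then 1 - cf_rem x1 0 else cf_rem x1 (Suc j)) - (if j = 0 then 1 - cf_rem x2 0 else cf_rem x2 (Suc j))\<bar>
       \<le> sqrt (1/2) ^ (m - Suc j) / sqrt (1/2)" if "Suc j \<le> m" for j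
    proof (cases "j = 0")
      case True then show ?thesis using cl'[of 0 j] that by (simp add: abs_minus_commute)
    next
      case False then show ?thesis using cl'[of "Suc j" j] that by simp
    qed
    show ?thesis
      apply (rule exI[of _ "\<lambda>j. if j = 0 then 1 - cf_rem x1 0 else cf_rem x1 (Suc j)"])
      apply (rule exI[of _ "\<lambda>j. if j = 0 then 1 - cf_rem x2 0 else cf_rem x2 (Suc j)"])
      apply (rule exI[of _ "\<lambda>j. (-1)^Suc j"])
      apply (rule exI[of _ "\<lambda>j. if j = 0 then f (cf_rem x1 0 - 1) else G x1 (Suc j)"])
      apply (rule exI[of _ "\<lambda>j. if j = 0 then f (cf_rem x2 0 - 1) else G x2 (Suc j)"])
      apply (rule exI[of _ "r1 - 1"], rule exI[of _ "r2 - 1"])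
      using c1 c2 f_neg[OF x1(1) 2(1) nz10(1)] f_neg[OF x2(1) _ nz10(2)] 2 fl mr1 mr2 clu
      by auto
  next
    case 3
    have d2: "cf_digit 1 x2 \<ge> 2" using 3 d1 by simp
    note c1 = chain_neg2[OF x1 B r1 r1ge(1) 3(2)]
    note c2 = chain_neg2[OF x2 B r2 r1ge(2) d2]
    define c where "c = real_of_int (cf_digit 1 x1) - 1"
    have c: "c \<ge> 1" using 3 by (simp add: c_def)
    have c2': "real_of_int (cf_digit 1 x2) - 1 = c" using d1 by (simp add: c_def)
    have clu: "\<bar>(if j = 0 then 1 - cf_rem x1 0 else if j = 1 then 1 / (c + cf_rem x1 1) else cf_rem x1 (j - 1))
        - (if j = 0 then 1 - cf_rem x2 0 else if j = 1 then 1 / (c + cf_rem x2 1) else cf_rem x2 (j - 1))\<bar>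
       \<le> sqrt (1/2) ^ (m - Suc j) / sqrt (1/2)" if "Suc j \<le> m" for j
    proof -
      consider "j = 0" | "j = 1" | "j \<ge> 2" by linarith
      then show ?thesis
      proof cases
        case 1 then show ?thesis using cl'[of 0 j] that by (simp add: abs_minus_commute)
      next
        case 2
        have "\<bar>1 / (c + cf_rem x1 1) - 1 / (c + cf_rem x2 1)\<bar> \<le> \<bar>cf_rem x1 1 - cf_rem x2 1\<bar>"
          using inv_diff_le[OF c] rem_range by auto
        then show ?thesis using cl'[of 1 j] that 2 by simp
      next
        case 3 then show ?thesis using cl'[of "j - 1" j] that by simp
      qed
    qed
    show ?thesis
      apply (rule exI[of _ "\<lambda>j. if j = 0 then 1 - cf_rem x1 0 else if j = 1 then 1 / (c + cf_rem x1 1) else cf_rem x1 (j - 1)"])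
      apply (rule exI[of _ "\<lambda>j. if j = 0 then 1 - cf_rem x2 0 else if j = 1 then 1 / (c + cf_rem x2 1) else cf_rem x2 (j - 1)"])
      apply (rule exI[of _ "\<lambda>j. (-1)^Suc j"])
      apply (rule exI[of _ "\<lambda>j. if j = 0 then f (cf_rem x1 0 - 1) else if j = 1 then f (1 / (c + cf_rem x1 1)) else G x1 (j - 1)"])
      apply (rule exI[of _ "\<lambda>j. if j = 0 then f (cf_rem x2 0 - 1) else if j = 1 then f (1 / (c + cf_rem x2 1)) else G x2 (j - 1)"])
      apply (rule exI[of _ "r1 + 1"], rule exI[of _ "r2 + 1"])
      using c1 c2 f_neg[OF x1(1) 3(1) nz10(1)] f_neg[OF x2(1) _ nz10(2)] 3 fl mr1 mr2 clu
      unfolding c2' c_def[symmetric]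
      by auto
  qed
qed

end

lemma powr_low:
  fixes u M \<delta> :: real
  assumes "0 < u" "u \<le> 1" "1 / M \<le> u" "M \<ge> 1"
  shows "u powr (\<delta> - 1) \<le> M powr (max 0 (1 - \<delta>))"
proof (cases "\<delta> \<ge> 1")
  case True
  have "u powr (\<delta> - 1) \<le> 1 powr (\<delta> - 1)" using assms True by (intro powr_mono2) auto
  then show ?thesis using True assms by simp
next
  case False
  have "u powr (\<delta> - 1) = (1 / u) powr (1 - \<delta>)"
    using assms by (simp add: powr_divide powr_minus_divide[symmetric])
  also have "\<dots> \<le> M powr (1 - \<delta>)"
  proof (rule powr_mono2)
    show "1 / u \<le> M" using assms by (simp add: field_simps)
  qed (use False assms in auto)
  finally show ?thesis using False by simp
qed

lemma max_powr_le:
  fixes X Y g :: real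
  assumes "X > 0" "Y > 0" "g \<ge> 0"
  shows "max X Y powr g \<le> X powr g + Y powr g"
  by (cases "X \<le> Y") (auto simp: max_def)

lemma Phi_asymp: "0 < g \<Longrightarrow> g < 1 \<Longrightarrow> t > 0 \<Longrightarrow>
  filterlim (\<lambda>x::real. (2 * ((x + 2) * (ln (x + 2))^2) + 2) powr g - t * x) at_bot at_top"
  by real_asymp

lemma Phi_bound:
  fixes \<gamma> \<tau> :: real
  assumes "0 \<le> \<gamma>" "\<gamma> < 1" "\<tau> > 0"
  shows "\<exists>c0. c0 \<ge> 0 \<and> (\<forall>j::nat. (2 * (real (j+2) * (ln (real (j+2)))^2) + 2) powr \<gamma> \<le> c0 + \<tau> * real j)"
proof (cases "\<gamma> = 0")
  case True
  have "(2 * (real (j+2) * (ln (real (j+2)))^2) + 2) powr \<gamma> \<le> 1 + \<tau> * real j" for j :: nat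
  proof -
    have "0 \<le> real (j+2) * (ln (real (j+2)))^2" by simp
    then have "(2 * (real (j+2) * (ln (real (j+2)))^2) + 2) \<noteq> 0" by linarith
    then have "(2 * (real (j+2) * (ln (real (j+2)))^2) + 2) powr \<gamma> = 1" using True by simp
    moreover have "0 \<le> \<tau> * real j" using assms by simp
    ultimately show ?thesis by linarith
  qed
  then show ?thesis by (intro exI[of _ 1]) auto
next
  case False
  then have g: "0 < \<gamma>" using assms by simp
  define \<Phi> where "\<Phi> x = (2 * ((x + 2) * (ln (x + 2))^2) + 2) powr \<gamma>" for x :: real
  have lim: "filterlim (\<lambda>x. \<Phi> x - \<tau> * x) at_bot at_top" unfolding \<Phi>_def by (rule Phi_asymp[OF g assms(2,3)])
  have ev: "eventually (\<lambda>x. \<Phi> x - \<tau> * x \<le> 0) at_top" using lim unfolding filterlim_at_bot by blast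
  have "eventually (\<lambda>j. \<Phi> (real j) - \<tau> * real j \<le> 0) sequentially"
    using filterlim_iff[THEN iffD1, OF filterlim_real_sequentially, rule_format, OF ev] by simp
  then obtain N0 where N0: "\<And>j. j \<ge> N0 \<Longrightarrow> \<Phi> (real j) \<le> \<tau> * real j"
    unfolding eventually_sequentially by force
  define c0 where "c0 = (\<Sum>i<N0. \<Phi> (real i))"
  have P0: "\<Phi> x \<ge> 0" for x by (simp add: \<Phi>_def)
  have c00: "c0 \<ge> 0" unfolding c0_def by (intro sum_nonneg) (simp add: P0)
  have "\<Phi> (real j) \<le> c0 + \<tau> * real j" for j
  proof (cases "j < N0")
    case True
    have "\<Phi> (real j) \<le> c0" unfolding c0_def using True P0
      by (intro member_le_sum) auto
    moreover have "0 \<le> \<tau> * real j" using assms by simp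
    ultimately show ?thesis by linarith
  next
    case False then show ?thesis using N0[of j] c00 by simp
  qed
  moreover have "real (j + 2) = real j + 2" for j by simp
  ultimately have "(2 * (real (j+2) * (ln (real (j+2)))^2) + 2) powr \<gamma> \<le> c0 + \<tau> * real j" for j :: nat
    unfolding \<Phi>_def by metis
  then show ?thesis using c00 by blast
qed

context L begin

definition a where "a = - Re k"
definition \<gamma>0 where "\<gamma>0 = max 0 (1 - \<delta>)"
definition \<tau> where "\<tau> = a * ln 2 / 4"
definition C0 where "C0 = max 0 (SOME C. \<forall>x. x \<noteq> 0 \<and> \<bar>x\<bar> \<le> 1 \<longrightarrow> norm (h x) \<le> C * exp (\<bar>x\<bar> powr (\<delta> - 1)))"
definition c0 where "c0 = (SOME c0. c0 \<ge> 0 \<and> (\<forall>j::nat. (2 * (real (j+2) * (ln (real (j+2)))^2) + 2) powr \<gamma>0 \<le> c0 + \<tau> * real j))"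
definition FF where "FF = norm (f 1) + norm (f (-1))"

lemma a_pos: "a > 0" using kneg by (simp add: a_def)
lemma tau_pos: "\<tau> > 0" using a_pos by (simp add: \<tau>_def)
lemma gamma0: "0 \<le> \<gamma>0" "\<gamma>0 < 1" using dpos by (auto simp: \<gamma>0_def)

lemma C0: "C0 \<ge> 0" "\<And>x. x \<noteq> 0 \<Longrightarrow> \<bar>x\<bar> \<le> 1 \<Longrightarrow> norm (h x) \<le> C0 * exp (\<bar>x\<bar> powr (\<delta> - 1))"
proof -
  define P where "P C \<longleftrightarrow> (\<forall>x. x \<noteq> 0 \<and> \<bar>x\<bar> \<le> 1 \<longrightarrow> norm (h x) \<le> C * exp (\<bar>x\<bar> powr (\<delta> - 1)))" for C
  obtain C where "P C" using hgrow unfolding P_def by blast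
  then have PS: "P (SOME C. P C)" by (rule someI)
  have C0eq: "C0 = max 0 (SOME C. P C)" unfolding C0_def P_def by simp
  show "C0 \<ge> 0" unfolding C0eq by simp
  fix x :: real assume x: "x \<noteq> 0" "\<bar>x\<bar> \<le> 1"
  have "norm (h x) \<le> (SOME C. P C) * exp (\<bar>x\<bar> powr (\<delta> - 1))" using PS x unfolding P_def by blast
  also have "\<dots> \<le> C0 * exp (\<bar>x\<bar> powr (\<delta> - 1))" unfolding C0eq by (rule mult_right_mono) auto
  finally show "norm (h x) \<le> C0 * exp (\<bar>x\<bar> powr (\<delta> - 1))" .
qed

lemma c0: "c0 \<ge> 0" "\<And>j. (2 * (real (j+2) * (ln (real (j+2)))^2) + 2) powr \<gamma>0 \<le> c0 + \<tau> * real j"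
proof -
  have ex: "\<exists>c0. c0 \<ge> 0 \<and> (\<forall>j::nat. (2 * (real (j+2) * (ln (real (j+2)))^2) + 2) powr \<gamma>0 \<le> c0 + \<tau> * real j)"
    by (rule Phi_bound[OF gamma0 tau_pos])
  show "c0 \<ge> 0" "\<And>j. (2 * (real (j+2) * (ln (real (j+2)))^2) + 2) powr \<gamma>0 \<le> c0 + \<tau> * real j"
    using someI_ex[OF ex] unfolding c0_def by blast+
qed

lemma h_chain_bound:
  assumes B: "B \<ge> 0" and u: "0 < u" "u \<le> 1" "u \<ge> 1 / (2 * Lb B (j + 2) + 2)" and s: "\<bar>s\<bar> = 1"
  shows "norm (h (s * u)) \<le> (C0 * exp c0 * exp ((2 * B + 2) powr \<gamma>0)) * exp \<tau> ^ j"
proof -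
  define M where "M = 2 * Lb B (j + 2) + 2"
  define Y where "Y = 2 * (real (j+2) * (ln (real (j+2)))^2) + 2"
  have M1: "M \<ge> 1" using Lb_nonneg[OF B] by (simp add: M_def)
  have MY: "M = max (2 * B + 2) Y" by (simp add: M_def Y_def Lb_def max_def)
  have "0 \<le> real (j+2) * (ln (real (j+2)))^2" by simp
  then have Y0: "Y > 0" unfolding Y_def by linarith
  have xs: "s * u \<noteq> 0" "\<bar>s * u\<bar> \<le> 1" "\<bar>s * u\<bar> = u" using u s by (auto simp: abs_mult)
  have "norm (h (s * u)) \<le> C0 * exp (u powr (\<delta> - 1))" using C0(2)[OF xs(1,2)] xs(3) by simp
  also have "u powr (\<delta> - 1) \<le> M powr \<gamma>0"
    unfolding \<gamma>0_def by (rule powr_low) (use u M1 in \<open>auto simp: M_def\<close>)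
  also have "M powr \<gamma>0 \<le> (2 * B + 2) powr \<gamma>0 + Y powr \<gamma>0"
    unfolding MY by (rule max_powr_le) (use B Y0 gamma0 in auto)
  also have "Y powr \<gamma>0 \<le> c0 + \<tau> * real j" unfolding Y_def by (rule c0(2))
  finally have "norm (h (s * u)) \<le> C0 * exp ((2 * B + 2) powr \<gamma>0 + (c0 + \<tau> * real j))"
    using C0(1) by (simp add: mult_left_mono)
  also have "\<dots> = (C0 * exp c0 * exp ((2 * B + 2) powr \<gamma>0)) * exp \<tau> ^ j"
    by (simp add: exp_add exp_of_nat_mult[symmetric] mult_ac)
  finally show ?thesis .
qed


definition ZZ where "ZZ B = (C0 * exp c0 * exp ((2 * B + 2) powr \<gamma>0) * (1 + exp \<tau>) + FF) / (1 - exp (-2*\<tau>))"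

lemma chain_low:
  assumes c: "chain u S g n B" and B: "B \<ge> 0" and j: "j < n" and LB: "Lb B (j+2) \<le> B"
  shows "u j \<ge> 1 / (2 * B + 2)" "0 < u j" "u j \<le> 1" "\<bar>S j\<bar> = 1"
proof -
  have a: "u j \<ge> 1 / (2 * Lb B (j + 2) + 2)" "0 < u j" "u j \<le> 1" "\<bar>S j\<bar> = 1"
    using c j unfolding chain_def by auto
  then show "0 < u j" "u j \<le> 1" "\<bar>S j\<bar> = 1" by auto
  have "1 / (2 * B + 2) \<le> 1 / (2 * Lb B (j + 2) + 2)"
    using LB Lb_nonneg[OF B, of "j+2"] by (intro divide_left_mono) auto
  then show "u j \<ge> 1 / (2 * B + 2)" using a by linarith
qed

lemma cp_le1: "0 < u \<Longrightarrow> u \<le> 1 \<Longrightarrow> norm (cp k u) \<le> 1"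
proof -
  assume u: "0 < u" "u \<le> 1"
  have "norm (cp k u) = u powr a" using cp_norm[OF u(1)] by (simp add: a_def)
  also have "\<dots> \<le> 1 powr a" using u a_pos by (intro powr_mono2) auto
  finally show ?thesis by simp
qed

lemma cp_pair: "0 < u \<Longrightarrow> 0 < v \<Longrightarrow> u * v \<le> 1/2 \<Longrightarrow> norm (cp k u) * norm (cp k v) \<le> exp (-4*\<tau>)"
proof -
  assume u: "0 < u" "0 < v" "u * v \<le> 1/2"
  have "norm (cp k u) * norm (cp k v) = (u * v) powr a" using cp_norm u by (simp add: a_def powr_mult)
  also have "\<dots> \<le> (1/2) powr a" using u a_pos by (intro powr_mono2) auto
  also have "(1/2::real) powr a = exp (-4*\<tau>)" by (simp add: powr_def \<tau>_def ln_div)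
  finally show ?thesis .
qed

lemma diff_est:
  assumes c1: "chain u1 S g1 n1 B" and c2: "chain u2 S g2 n2 B" and B: "B \<ge> 0"
    and N: "N \<le> n1" "N \<le> n2"
    and LB: "\<And>j. j < N \<Longrightarrow> Lb B (j+2) \<le> B"
    and cl: "\<And>j. j < N \<Longrightarrow> \<bar>u1 j - u2 j\<bar> \<le> dm" and dm: "dm \<ge> 0"
    and Hd: "\<And>j. j < N \<Longrightarrow> norm (h (S j * u1 j) - h (S j * u2 j)) \<le> \<eta>" and eta: "\<eta> \<ge> 0"
  shows "norm (g1 0 - g2 0) \<le> exp (2*\<tau>) * (\<eta> / (1 - exp (-2*\<tau>))
      + N * (norm k * (dm * (2*B+2)) * exp (norm k * (dm * (2*B+2)))) * ZZ B * exp \<tau>)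
      + exp (2*\<tau>) * exp (-\<tau>) ^ N * (2 * ZZ B)"
proof -
  define K where "K = C0 * exp c0 * exp ((2 * B + 2) powr \<gamma>0)"
  define l where "l = 1 / (2 * B + 2)"
  define \<Lambda> where "\<Lambda> = norm k * (dm * (2*B+2)) * exp (norm k * (dm * (2*B+2)))"
  have t: "\<tau> > 0" by (rule tau_pos)
  have K0: "K \<ge> 0" using C0(1) by (simp add: K_def)
  have E1: "exp \<tau> \<ge> 1" using t by simp
  have qE: "exp (-4*\<tau>) * (exp \<tau>)^2 \<le> exp (-2*\<tau>)"
    by (simp add: exp_add[symmetric] power2_eq_square)
  have rho: "exp (-2*\<tau>) < 1" using t by simp
  have F0: "FF \<ge> 0" by (simp add: FF_def)
  have sq: "sqrt (exp (-4*\<tau>)) = exp (-2*\<tau>)"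
  proof -
    have "exp (-4*\<tau>) = (exp (-2*\<tau>))^2" by (simp add: power2_eq_square exp_add[symmetric])
    then show ?thesis by simp
  qed
  have ZZ: "ZZ B = (K * (1 + exp \<tau>) + FF) / (1 - exp (-2*\<tau>))" by (simp add: ZZ_def K_def)
  have gen: "(\<forall>j\<le>n. norm (g j) \<le> ZZ B * exp \<tau> ^ j) \<and> (\<forall>j\<le>n. norm (prod (\<lambda>i. cp k (u i)) {..<j}) \<le> exp (2*\<tau>) * exp (-2*\<tau>) ^ j)"
    if c: "chain u S g n B" for u g n
  proof -
    have ch: "\<And>j. j < n \<Longrightarrow> 0 < u j \<and> u j \<le> 1 \<and> \<bar>S j\<bar> = 1 \<and> g j = h (S j * u j) + cp k (u j) * g (Suc j)
        \<and> u j \<ge> 1 / (2 * Lb B (j + 2) + 2)"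
      "\<And>j. Suc j < n \<Longrightarrow> u j * u (Suc j) \<le> 1/2" "norm (g n) \<le> FF"
      using c unfolding chain_def FF_def by auto
    have c1': "\<And>j. j < n \<Longrightarrow> norm (cp k (u j)) \<le> 1" using ch(1) cp_le1 by auto
    have pr: "\<And>j. Suc j < n \<Longrightarrow> norm (cp k (u j)) * norm (cp k (u (Suc j))) \<le> exp (-4*\<tau>)"
      using ch(1,2) cp_pair by (meson Suc_lessD)
    have Hb: "\<And>j. j < n \<Longrightarrow> norm (h (S j * u j)) \<le> K * exp \<tau> ^ j"
      using ch(1) h_chain_bound[OF B] unfolding K_def by (metis mult.commute)
    have g: "j \<le> n \<Longrightarrow> norm (g j) \<le> (K * (1 + exp \<tau>) + FF) / (1 - exp (-2*\<tau>)) * exp \<tau> ^ j" for j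
      by (rule gbound[where H="\<lambda>j. h (S j * u j)" and c="\<lambda>j. cp k (u j)" and q="exp (-4*\<tau>)"])
        (use ch c1' pr Hb K0 E1 qE rho F0 in auto)
    have W: "j \<le> n \<Longrightarrow> norm (prod (\<lambda>i. cp k (u i)) {..<j}) \<le> sqrt (exp (-4*\<tau>)) ^ j / sqrt (exp (-4*\<tau>))" for j
      by (rule Wbound) (use c1' pr t in auto)
    have "exp (-2*\<tau>) ^ j / exp (-2*\<tau>) = exp (2*\<tau>) * exp (-2*\<tau>) ^ j" for j
      by (simp add: exp_minus field_simps)
    then show ?thesis using g W unfolding ZZ sq by auto
  qed
  have g1b: "\<And>j. j \<le> N \<Longrightarrow> norm (g1 j) \<le> ZZ B * exp \<tau> ^ j" using gen[OF c1] N by auto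
  have g2b: "\<And>j. j \<le> N \<Longrightarrow> norm (g2 j) \<le> ZZ B * exp \<tau> ^ j" using gen[OF c2] N by auto
  have W1: "\<And>j. j \<le> N \<Longrightarrow> norm (prod (\<lambda>i. cp k (u1 i)) {..<j}) \<le> exp (2*\<tau>) * exp (-2*\<tau>) ^ j"
    using gen[OF c1] N by auto
  have rec: "\<And>j. j < N \<Longrightarrow> g1 j = h (S j * u1 j) + cp k (u1 j) * g1 (Suc j)"
    "\<And>j. j < N \<Longrightarrow> g2 j = h (S j * u2 j) + cp k (u2 j) * g2 (Suc j)"
    using c1 c2 N unfolding chain_def by auto
  have cd: "norm (cp k (u1 j) - cp k (u2 j)) \<le> \<Lambda>" if j: "j < N" for j
  proof -
    have l0: "0 < l" using B by (simp add: l_def)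
    note a1 = chain_low[OF c1 B _ LB[OF j]] and a2 = chain_low[OF c2 B _ LB[OF j]]
    have u: "l \<le> u1 j" "l \<le> u2 j" "u1 j \<le> 1" "u2 j \<le> 1" using a1 a2 j N by (auto simp: l_def)
    have "norm (cp k (u1 j) - cp k (u2 j)) \<le> norm k * (\<bar>u1 j - u2 j\<bar> / l) * exp (norm k * (\<bar>u1 j - u2 j\<bar> / l))"
      by (rule cp_diff[OF kneg l0 u])
    also have "\<dots> \<le> \<Lambda>"
    proof -
      have "\<bar>u1 j - u2 j\<bar> / l \<le> dm * (2*B+2)" using cl[OF j] B by (simp add: l_def)
      then have "norm k * (\<bar>u1 j - u2 j\<bar> / l) \<le> norm k * (dm * (2*B+2))" by (rule mult_left_mono) simp
      moreover have "0 \<le> norm k * (\<bar>u1 j - u2 j\<bar> / l)" using l0 by simp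
      ultimately show ?thesis unfolding \<Lambda>_def
        using mult_mono[of "norm k * (\<bar>u1 j - u2 j\<bar> / l)" "norm k * (dm * (2*B+2))"
            "exp (norm k * (\<bar>u1 j - u2 j\<bar> / l))" "exp (norm k * (dm * (2*B+2)))"]
        by (meson exp_le_cancel_iff exp_ge_zero order.trans)
    qed
    finally show ?thesis .
  qed
  have Lam0: "\<Lambda> \<ge> 0" using dm B by (simp add: \<Lambda>_def)
  have ZZ0: "ZZ B \<ge> 0" unfolding ZZ using K0 F0 rho t by (intro divide_nonneg_pos) auto
  have sE: "exp (-2*\<tau>) * exp \<tau> = exp (-\<tau>)" by (simp add: exp_add[symmetric])
  have main: "norm (g1 0 - g2 0) \<le> exp (2*\<tau>) * (\<eta> / (1 - exp (-2*\<tau>)) + N * \<Lambda> * ZZ B * exp \<tau>)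
      + exp (2*\<tau>) * (exp (-2*\<tau>) * exp \<tau>) ^ N * (2 * ZZ B)"
    by (rule chain_diff[where ?H1.0="\<lambda>j. h (S j * u1 j)" and ?H2.0="\<lambda>j. h (S j * u2 j)"
        and ?c1.0="\<lambda>j. cp k (u1 j)" and ?c2.0="\<lambda>j. cp k (u2 j)"])
      (use rec W1 Hd cd g1b g2b t eta Lam0 ZZ0 sE E1 in auto)
  then show ?thesis unfolding sE \<Lambda>_def by simp
qed

end

lemma sqrt_half: "sqrt (1/2::real) = exp (- ln 2 / 2)"
proof -
  have "(exp (- ln 2 / 2))^2 = exp (- ln (2::real))" by (simp add: power2_eq_square exp_add[symmetric])
  also have "\<dots> = 1/2" by (simp add: exp_minus)
  finally have e: "(exp (- ln 2 / 2))^2 = (1/2::real)" .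
  have "sqrt (1/2::real) = sqrt ((exp (- ln 2 / 2))^2)" by (simp only: e)
  also have "\<dots> = exp (- ln 2 / 2)" by (simp only: real_sqrt_abs) simp
  finally show ?thesis .
qed

lemma dm_bound: "sqrt (1/2::real) ^ (m - m div 2) / sqrt (1/2) \<le> 2 * exp (- (ln 2 / 4) * real m)"
proof -
  have "sqrt (1/2::real) ^ (m - m div 2) = exp (real (m - m div 2) * (- ln 2 / 2))"
    by (simp only: sqrt_half exp_of_nat_mult)
  also have "\<dots> \<le> exp (- (ln 2 / 4) * real m)"
  proof -
    have "real (m - m div 2) \<ge> real m / 2" by linarith
    then have "real (m - m div 2) * (ln 2 / 2) \<ge> (real m / 2) * (ln 2 / 2)"
      by (intro mult_right_mono) auto
    then show ?thesis by simp
  qed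
  finally have a: "sqrt (1/2::real) ^ (m - m div 2) \<le> exp (- (ln 2 / 4) * real m)" .
  have "sqrt (2::real) \<le> sqrt 4" by (rule real_sqrt_le_mono) simp
  then have b: "1 / sqrt (1/2::real) \<le> 2" by (simp add: real_sqrt_divide real_sqrt_four)
  have "sqrt (1/2::real) ^ (m - m div 2) / sqrt (1/2) = sqrt (1/2::real) ^ (m - m div 2) * (1 / sqrt (1/2))"
    by simp
  also have "\<dots> \<le> exp (- (ln 2 / 4) * real m) * 2"
    using a b by (intro mult_mono) auto
  finally show ?thesis by simp
qed

lemma expN_bound:
  fixes t :: real assumes "t \<ge> 0"
  shows "exp (- t) ^ (m div 2) \<le> exp (t / 2) * exp (- (t / 2) * real m)"
proof -
  have "exp (- t) ^ (m div 2) = exp (real (m div 2) * (- t))" by (simp only: exp_of_nat_mult)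
  also have "\<dots> \<le> exp (t / 2 + (- (t / 2) * real m))"
  proof -
    have "m \<le> 2 * (m div 2) + 1" by linarith
    then have "real m \<le> 2 * real (m div 2) + 1" by linarith
    then have "real (m div 2) \<ge> (real m - 1) / 2" by (simp add: field_simps)
    then have "real (m div 2) * t \<ge> ((real m - 1) / 2) * t" using assms by (intro mult_right_mono) auto
    then show ?thesis by (simp add: algebra_simps)
  qed
  also have "\<dots> = exp (t / 2) * exp (- (t / 2) * real m)" by (rule exp_add)
  finally show ?thesis .
qed

lemma powr_bd:
  fixes x \<gamma> g d :: real
  assumes x: "x \<ge> 1" and g: "0 \<le> \<gamma>" "\<gamma> \<le> 1" and d: "d > 0" and e: "(1 + d) * \<gamma> \<le> g"
  shows "(8 * x powr (1 + d) + 8) powr \<gamma> \<le> 16 * x powr g"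
proof -
  have x1: "x powr (1 + d) \<ge> 1" using x d by (simp add: ge_one_powr_ge_zero)
  have "(8 * x powr (1 + d) + 8) powr \<gamma> \<le> (16 * x powr (1 + d)) powr \<gamma>"
    using x1 g by (intro powr_mono2) auto
  also have "\<dots> = 16 powr \<gamma> * x powr ((1 + d) * \<gamma>)" using x by (simp add: powr_mult powr_powr)
  also have "\<dots> \<le> 16 powr 1 * x powr g"
    using x g e by (intro mult_mono powr_mono) auto
  finally show ?thesis by simp
qed

lemma asymR: "0 < g \<Longrightarrow> g < 1 \<Longrightarrow> s > 0 \<Longrightarrow> d > 0 \<Longrightarrow>
  ((\<lambda>x::real. x powr (3+d) * exp (16 * x powr g - s * x)) \<longlongrightarrow> 0) at_top"
  by real_asymp

lemma asym2: "0 < d \<Longrightarrow> eventually (\<lambda>x::real. (x+2) * ln(x+2)^2 \<le> x powr (1+d)) at_top"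
  by real_asymp

lemma asym3: "0 < d \<Longrightarrow> ((\<lambda>x::real. 1 / (8 * x powr (1+d) + 8)) \<longlongrightarrow> 0) at_top"
  by real_asymp

context L begin

theorem propS_main: "propS (1 + \<delta>) f"
  unfolding propS_def
proof (intro allI impI)
  fix e :: real assume e: "e > 0"
  have t: "\<tau> > 0" by (rule tau_pos)
  define ca where "ca = exp (2*\<tau>)"
  define s2 where "s2 = 1 - exp (-2*\<tau>)"
  have s2: "s2 > 0" using t by (simp add: s2_def)
  have ca: "ca > 0" by (simp add: ca_def)
  define \<eta> where "\<eta> = e * s2 / (2 * ca)"
  have eta: "\<eta> > 0" using e s2 ca by (simp add: \<eta>_def)
  have etaeq: "ca * (\<eta> / s2) = e / 2" using s2 ca by (simp add: \<eta>_def field_simps)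
  obtain \<epsilon>0 where \<epsilon>0: "\<epsilon>0 > 0" and h\<epsilon>: "\<And>\<epsilon>. 0 < \<epsilon> \<Longrightarrow> \<epsilon> < \<epsilon>0 \<Longrightarrow> (\<forall>x y. x \<noteq> 0 \<and> y \<noteq> 0 \<and>
           \<bar>x - y\<bar> < exp (- (\<epsilon> powr (\<delta> - 1))) \<and> \<bar>x\<bar> > 2 * \<epsilon> \<longrightarrow> norm (h x - h y) \<le> \<eta>)"
    using hcont[OF eta] unfolding eventually_at_right_field by auto
  define g1 where "g1 = max ((1+\<delta>)*\<gamma>0) (1/2)"
  have g1: "0 < g1" "g1 < 1" "(1+\<delta>)*\<gamma>0 \<le> g1"
  proof -
    have "(1+\<delta>)*\<gamma>0 < 1"
    proof (cases "\<delta> \<ge> 1")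
      case True then show ?thesis by (simp add: \<gamma>0_def)
    next
      case False
      then have "(1+\<delta>)*\<gamma>0 = 1 - \<delta>^2" by (simp add: \<gamma>0_def power2_eq_square algebra_simps)
      then show ?thesis using dpos by simp
    qed
    then show "0 < g1" "g1 < 1" "(1+\<delta>)*\<gamma>0 \<le> g1" by (auto simp: g1_def)
  qed
  define \<sigma> where "\<sigma> = min (ln 2 / 4) (\<tau> / 2)"
  have \<sigma>: "\<sigma> > 0" "\<sigma> \<le> ln 2 / 4" "\<sigma> \<le> \<tau> / 2" using t by (auto simp: \<sigma>_def)
  define A where "A = (C0 * exp c0 * (1 + exp \<tau>) + FF) / s2"
  have A0: "A \<ge> 0" unfolding A_def using C0(1) s2 by (intro divide_nonneg_pos) (auto simp: FF_def)
  define K4 where "K4 = ca * 8 * exp 1 * norm k * A * exp \<tau>"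
  define K5 where "K5 = 2 * ca * exp (\<tau>/2) * A"
  have K45: "K4 \<ge> 0" "K5 \<ge> 0" using ca A0 by (auto simp: K4_def K5_def)
  define \<theta> where "\<theta> = min (1/4) (min (1 / (8 * norm k + 1)) (e / (4 * (K4 + K5 + 1))))"
  have nk: "8 * norm k + 1 > 0" using norm_ge_zero[of k] by linarith
  have th0: "\<theta> > 0" using e K45 nk by (simp add: \<theta>_def)
  have th1: "2 * \<theta> < 1" by (simp add: \<theta>_def)
  have th2: "8 * norm k * \<theta> \<le> 1"
  proof -
    have "\<theta> \<le> 1 / (8 * norm k + 1)" by (simp add: \<theta>_def)
    then have "\<theta> * (8 * norm k + 1) \<le> 1" using nk by (simp add: le_divide_eq)
    then show ?thesis using th0 by (simp add: algebra_simps)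
  qed
  have th3: "K4 * \<theta> \<le> e / 4" "K5 * \<theta> \<le> e / 4"
  proof -
    have "\<theta> \<le> e / (4 * (K4 + K5 + 1))" by (simp add: \<theta>_def)
    then have "(4 * (K4 + K5 + 1)) * \<theta> \<le> e" using K45 by (simp add: field_simps)
    then show "K4 * \<theta> \<le> e / 4" "K5 * \<theta> \<le> e / 4" using K45 th0
      by (simp_all add: algebra_simps) (smt (verit) mult_nonneg_nonneg)+
  qed
  define R where "R x = x powr (3+\<delta>) * exp (16 * x powr g1 - \<sigma> * x)" for x :: real
  have "(R \<longlongrightarrow> 0) at_top" unfolding R_def using asymR[OF g1(1,2) \<sigma>(1) dpos] .
  then have evR: "eventually (\<lambda>x. R x < \<theta>) at_top" using th0 by (rule order_tendstoD(2))
  have ev3: "eventually (\<lambda>x::real. 1 / (8 * x powr (1+\<delta>) + 8) < \<epsilon>0) at_top"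
    using order_tendstoD(2)[OF asym3[OF dpos] \<epsilon>0] .
  have ev4: "eventually (\<lambda>x::real. x \<ge> 2) at_top" by (rule eventually_ge_at_top)
  have evall: "eventually (\<lambda>x. R x < \<theta> \<and> (x+2) * ln(x+2)^2 \<le> x powr (1+\<delta>)
      \<and> 1 / (8 * x powr (1+\<delta>) + 8) < \<epsilon>0 \<and> x \<ge> 2) at_top"
    using evR asym2[OF dpos] ev3 ev4 by eventually_elim auto
  have evm: "eventually (\<lambda>m. R (real m) < \<theta> \<and> (real m+2) * ln(real m+2)^2 \<le> real m powr (1+\<delta>)
      \<and> 1 / (8 * real m powr (1+\<delta>) + 8) < \<epsilon>0 \<and> real m \<ge> 2) sequentially"
    using filterlim_iff[THEN iffD1, OF filterlim_real_sequentially, rule_format, OF evall] by simp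
  show "\<forall>\<^sub>F m in sequentially. \<forall>x\<in>cfT (real m powr (1 + \<delta>)). \<forall>x'\<in>cfV (real m powr (1 + \<delta>)) m x.
          \<forall>x''\<in>cfV (real m powr (1 + \<delta>)) m x. norm (f x' - f x'') \<le> e"
    using evm
  proof (rule eventually_mono, intro ballI)
    fix m x x' x''
    assume H: "R (real m) < \<theta> \<and> (real m+2) * ln(real m+2)^2 \<le> real m powr (1+\<delta>)
      \<and> 1 / (8 * real m powr (1+\<delta>) + 8) < \<epsilon>0 \<and> real m \<ge> 2"
    define B where "B = real m powr (1 + \<delta>)"
    define xr where "xr = real m"
    assume x: "x \<in> cfT B" and x': "x' \<in> cfV B m x" and x'': "x'' \<in> cfV B m x"
    have xr2: "xr \<ge> 2" using H by (simp add: xr_def)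
    have m2: "m \<ge> 2" using xr2 by (simp add: xr_def)
    have B1: "B \<ge> 1" unfolding B_def using xr2 dpos by (simp add: ge_one_powr_ge_zero xr_def)
    have B0: "B \<ge> 0" using B1 by simp
    define N where "N = m div 2"
    define P where "P = exp (16 * xr powr g1)"
    define Ex where "Ex = exp (- \<sigma> * xr)"
    have P1: "P \<ge> 1" using xr2 by (simp add: P_def)
    have Ex0: "Ex > 0" by (simp add: Ex_def)
    have x3: "xr powr (3 + \<delta>) \<ge> 1" using xr2 dpos by (simp add: ge_one_powr_ge_zero)
    have RR: "xr powr (3 + \<delta>) * P * Ex < \<theta>"
    proof -
      have "R xr = xr powr (3 + \<delta>) * P * Ex" by (simp add: R_def P_def Ex_def exp_diff exp_minus field_simps)
      then show ?thesis using H by (simp add: xr_def)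
    qed
    have PEx: "P * Ex \<le> xr powr (3 + \<delta>) * P * Ex"
      using mult_right_mono[OF x3, of "P * Ex"] P1 Ex0 by (simp add: mult.assoc)
    have Bx: "B \<le> xr powr (3 + \<delta>)" unfolding B_def xr_def using xr2 dpos
      by (intro powr_mono) (auto simp: xr_def)
    have xB: "xr * B \<le> xr powr (3 + \<delta>)"
    proof -
      have "xr powr (2 + \<delta>) = xr powr (1 + (1 + \<delta>))" by (simp add: add_ac)
      also have "\<dots> = xr powr 1 * xr powr (1 + \<delta>)" by (rule powr_add)
      also have "\<dots> = xr * B" using xr2 by (simp add: B_def xr_def)
      finally have "xr * B = xr powr (2 + \<delta>)" by simp
      also have "\<dots> \<le> xr powr (3 + \<delta>)" using xr2 by (intro powr_mono) auto
      finally show ?thesis .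
    qed
    have pw8: "(8 * B + 8) powr \<gamma>0 \<le> 16 * xr powr g1"
      unfolding B_def xr_def by (rule powr_bd) (use xr2 gamma0 dpos g1 in \<open>auto simp: xr_def\<close>)
    have pw2: "(2 * B + 2) powr \<gamma>0 \<le> (8 * B + 8) powr \<gamma>0"
      using B0 gamma0 by (intro powr_mono2) auto
    define dm where "dm = sqrt (1/2::real) ^ (m - N) / sqrt (1/2)"
    have dm0: "dm \<ge> 0" by (simp add: dm_def)
    have dmb: "dm \<le> 2 * Ex"
    proof -
      have "dm \<le> 2 * exp (- (ln 2 / 4) * real m)" unfolding dm_def N_def by (rule dm_bound)
      also have "\<dots> \<le> 2 * Ex" unfolding Ex_def xr_def using \<sigma> xr2
        by (simp add: mult_right_mono xr_def)
      finally show ?thesis .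
    qed
    define \<epsilon> where "\<epsilon> = 1 / (8 * B + 8)"
    have e01: "0 < \<epsilon>" using B0 by (simp add: \<epsilon>_def)
    have e02: "\<epsilon> < \<epsilon>0" using H by (simp add: \<epsilon>_def B_def)
    have e03: "\<epsilon> \<le> 1" using B0 by (simp add: \<epsilon>_def field_simps)
    note eps = e01 e02 e03
    have win: "dm < exp (- (\<epsilon> powr (\<delta> - 1)))"
    proof -
      have "\<epsilon> powr (\<delta> - 1) \<le> (8 * B + 8) powr \<gamma>0"
        unfolding \<gamma>0_def by (rule powr_low) (use eps B0 in \<open>auto simp: \<epsilon>_def\<close>)
      also have "\<dots> \<le> 16 * xr powr g1" by (rule pw8)
      finally have a: "exp (\<epsilon> powr (\<delta> - 1)) \<le> P" unfolding P_def by simp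
      have "dm * P \<le> 2 * Ex * P" using dmb P1 by (simp add: mult_right_mono)
      also have "\<dots> \<le> 2 * (xr powr (3 + \<delta>) * P * Ex)" using PEx by (simp add: mult_ac)
      also have "\<dots> < 1" using RR th1 by linarith
      finally have "dm * P < 1" .
      then have "dm < 1 / P" using P1 by (simp add: field_simps)
      also have "1 / P \<le> 1 / exp (\<epsilon> powr (\<delta> - 1))" using a P1 by (intro divide_left_mono) (auto intro: mult_pos_pos)
      also have "\<dots> = exp (- (\<epsilon> powr (\<delta> - 1)))" by (simp add: exp_minus inverse_eq_divide)
      finally show ?thesis .
    qed
    have x'P: "x' \<in> \<rat>" "x' \<in> cfT B" "enat m \<le> cf_len x'" "\<And>j. j \<le> m \<Longrightarrow> cf_digit j x' = cf_digit j x"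
      using x' by (auto simp: cfV_def)
    have x''P: "x'' \<in> \<rat>" "x'' \<in> cfT B" "enat m \<le> cf_len x''" "\<And>j. j \<le> m \<Longrightarrow> cf_digit j x'' = cf_digit j x"
      using x'' by (auto simp: cfV_def)
    obtain u1 u2 S g1' g2' n1 n2 where ch: "chain u1 S g1' n1 B" "chain u2 S g2' n2 B"
      "f x' = g1' 0" "f x'' = g2' 0" "n1 \<ge> m - 1" "n2 \<ge> m - 1"
      and cl: "\<And>j. Suc j \<le> m \<Longrightarrow> \<bar>u1 j - u2 j\<bar> \<le> sqrt (1/2) ^ (m - Suc j) / sqrt (1/2)"
      using two_chains[OF x'P(1,2) x''P(1,2) B0 m2 x'P(3) x''P(3)] x'P(4) x''P(4) by metis
    have Nn: "N \<le> n1" "N \<le> n2" using ch m2 by (auto simp: N_def)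
    have LB: "Lb B (j+2) \<le> B" if "j < N" for j
    proof -
      have "Lb B (j+2) \<le> Lb B (m+2)" using that by (intro Lb_mono) (auto simp: N_def)
      also have "Lb B (m+2) = B" using H by (simp add: Lb_def B_def add.commute)
      finally show ?thesis .
    qed
    have cl': "\<bar>u1 j - u2 j\<bar> \<le> dm" if "j < N" for j
    proof -
      have "\<bar>u1 j - u2 j\<bar> \<le> sqrt (1/2) ^ (m - Suc j) / sqrt (1/2)" using cl that by (simp add: N_def)
      also have "\<dots> \<le> dm" unfolding dm_def using that
        by (intro divide_right_mono power_decreasing) (auto simp: N_def)
      finally show ?thesis .
    qed
    have Hd: "norm (h (S j * u1 j) - h (S j * u2 j)) \<le> \<eta>" if j: "j < N" for j
    proof -
      note a1 = chain_low[OF ch(1) B0 _ LB[OF j]] and a2 = chain_low[OF ch(2) B0 _ LB[OF j]]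
      have u: "1 / (2 * B + 2) \<le> u1 j" "0 < u1 j" "0 < u2 j" "\<bar>S j\<bar> = 1" using a1 a2 j Nn by auto
      have "2 * \<epsilon> < 1 / (2 * B + 2)" using B0 by (simp add: \<epsilon>_def field_simps)
      then have gt: "\<bar>S j * u1 j\<bar> > 2 * \<epsilon>" using u by (simp add: abs_mult)
      have nz: "S j * u1 j \<noteq> 0" "S j * u2 j \<noteq> 0" using u by auto
      have "\<bar>S j * u1 j - S j * u2 j\<bar> = \<bar>u1 j - u2 j\<bar>" using u
        by (simp add: abs_mult right_diff_distrib[symmetric])
      also have "\<dots> \<le> dm" by (rule cl'[OF j])
      finally have "\<bar>S j * u1 j - S j * u2 j\<bar> < exp (- (\<epsilon> powr (\<delta> - 1)))" using win by linarith
      then show ?thesis using h\<epsilon>[OF eps(1,2)] nz gt by blast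
    qed
    have est: "norm (g1' 0 - g2' 0) \<le> exp (2*\<tau>) * (\<eta> / (1 - exp (-2*\<tau>))
      + N * (norm k * (dm * (2*B+2)) * exp (norm k * (dm * (2*B+2)))) * ZZ B * exp \<tau>)
      + exp (2*\<tau>) * exp (-\<tau>) ^ N * (2 * ZZ B)"
      by (rule diff_est[OF ch(1,2) B0 Nn LB cl' dm0 Hd]) (use eta in auto)
    define X where "X = norm k * (dm * (2*B+2))"
    have X0: "X \<ge> 0" using dm0 B0 by (simp add: X_def)
    have dmB: "dm * (2*B+2) \<le> 8 * B * Ex"
    proof -
      have "dm * (2*B+2) \<le> (2 * Ex) * (4 * B)" using dmb dm0 B1 by (intro mult_mono) auto
      then show ?thesis by (simp add: mult_ac)
    qed
    have BEx: "B * Ex \<le> xr powr (3 + \<delta>) * P * Ex"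
    proof -
      have "B * Ex \<le> xr powr (3 + \<delta>) * Ex" using Bx Ex0 by (simp add: mult_right_mono)
      also have "\<dots> \<le> xr powr (3 + \<delta>) * P * Ex"
      proof -
        have "(xr powr (3 + \<delta>) * Ex) * 1 \<le> (xr powr (3 + \<delta>) * Ex) * P"
          using P1 Ex0 x3 by (intro mult_left_mono) auto
        then show ?thesis by (simp add: mult_ac)
      qed
      finally show ?thesis .
    qed
    have X1: "X \<le> 1"
    proof -
      have "X \<le> norm k * (8 * B * Ex)" unfolding X_def using dmB by (simp add: mult_left_mono)
      also have "\<dots> \<le> norm k * (8 * \<theta>)" using BEx RR by (intro mult_left_mono) auto
      finally show ?thesis using th2 by (simp add: mult_ac)
    qed
    have Lam: "X * exp X \<le> exp 1 * norm k * (8 * B * Ex)"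
    proof -
      have "X * exp X \<le> X * exp 1" using X1 X0 by (intro mult_left_mono) auto
      also have "\<dots> \<le> norm k * (8 * B * Ex) * exp 1" unfolding X_def using dmB
        by (intro mult_right_mono mult_left_mono) auto
      finally show ?thesis by (simp add: mult_ac)
    qed
    have ZZb: "ZZ B \<le> A * P"
    proof -
      have e1: "exp ((2 * B + 2) powr \<gamma>0) \<le> P" unfolding P_def using pw2 pw8 by simp
      have num: "C0 * exp c0 * exp ((2 * B + 2) powr \<gamma>0) * (1 + exp \<tau>) + FF
          \<le> C0 * exp c0 * P * (1 + exp \<tau>) + FF * P"
      proof (rule add_mono)
        show "FF \<le> FF * P" using mult_left_mono[OF P1, of FF] by (simp add: FF_def)
        show "C0 * exp c0 * exp ((2 * B + 2) powr \<gamma>0) * (1 + exp \<tau>) \<le> C0 * exp c0 * P * (1 + exp \<tau>)"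
          using e1 C0(1) by (intro mult_right_mono mult_left_mono) auto
      qed
      have "ZZ B = (C0 * exp c0 * exp ((2 * B + 2) powr \<gamma>0) * (1 + exp \<tau>) + FF) / s2"
        by (simp add: ZZ_def s2_def)
      also have "\<dots> \<le> (C0 * exp c0 * P * (1 + exp \<tau>) + FF * P) / s2"
        by (rule divide_right_mono[OF num]) (use s2 in simp)
      also have "\<dots> = A * P" using s2 by (simp add: A_def field_simps)
      finally show ?thesis .
    qed
    have ZZ0: "ZZ B \<ge> 0" unfolding ZZ_def using C0(1) t by (intro divide_nonneg_pos) (auto simp: FF_def)
    have term1: "exp (2*\<tau>) * (\<eta> / (1 - exp (-2*\<tau>))) = e / 2" using etaeq by (simp add: ca_def s2_def)
    have term2: "exp (2*\<tau>) * (N * (X * exp X) * ZZ B * exp \<tau>) \<le> e / 4"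
    proof -
      have N: "real N \<le> xr" by (simp add: N_def xr_def)
      have "exp (2*\<tau>) * (N * (X * exp X) * ZZ B * exp \<tau>)
          \<le> ca * (xr * (exp 1 * norm k * (8 * B * Ex)) * (A * P) * exp \<tau>)"
      proof -
        have XX: "0 \<le> X * exp X" using X0 by simp
        have L0: "0 \<le> exp 1 * norm k * (8 * B * Ex)" using B0 Ex0 by simp
        have s1: "real N * (X * exp X) \<le> xr * (exp 1 * norm k * (8 * B * Ex))"
          by (rule mult_mono[OF N Lam]) (use XX xr2 in auto)
        have s2': "real N * (X * exp X) * ZZ B \<le> xr * (exp 1 * norm k * (8 * B * Ex)) * (A * P)"
          by (rule mult_mono[OF s1 ZZb]) (use L0 xr2 ZZ0 in auto)
        have s3: "real N * (X * exp X) * ZZ B * exp \<tau> \<le> xr * (exp 1 * norm k * (8 * B * Ex)) * (A * P) * exp \<tau>"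
          by (rule mult_right_mono[OF s2']) auto
        show ?thesis unfolding ca_def by (rule mult_left_mono[OF s3]) auto
      qed
      also have "\<dots> = K4 * ((xr * B) * P * Ex)" by (simp add: K4_def mult_ac)
      also have "\<dots> \<le> K4 * (xr powr (3 + \<delta>) * P * Ex)"
        using xB P1 Ex0 K45 by (intro mult_left_mono mult_right_mono) auto
      also have "\<dots> \<le> K4 * \<theta>" using RR K45 by (intro mult_left_mono) auto
      finally show ?thesis using th3 by linarith
    qed
    have term3: "exp (2*\<tau>) * exp (-\<tau>) ^ N * (2 * ZZ B) \<le> e / 4"
    proof -
      have a: "exp (-\<tau>) ^ N \<le> exp (\<tau>/2) * Ex"
      proof -
        have "exp (-\<tau>) ^ N \<le> exp (\<tau> / 2) * exp (- (\<tau> / 2) * real m)"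
          unfolding N_def by (rule expN_bound) (use t in simp)
        also have "\<dots> \<le> exp (\<tau> / 2) * Ex" unfolding Ex_def xr_def using \<sigma> xr2
          by (simp add: mult_right_mono xr_def)
        finally show ?thesis .
      qed
      have "exp (2*\<tau>) * exp (-\<tau>) ^ N * (2 * ZZ B) \<le> ca * (exp (\<tau>/2) * Ex) * (2 * (A * P))"
        unfolding ca_def using a ZZb ZZ0 Ex0 by (intro mult_mono mult_left_mono) auto
      also have "\<dots> = K5 * (P * Ex)" by (simp add: K5_def mult_ac)
      also have "\<dots> \<le> K5 * \<theta>" using PEx RR K45 by (intro mult_left_mono) auto
      finally show ?thesis using th3 by linarith
    qed
    have "norm (f x' - f x'') = norm (g1' 0 - g2' 0)" using ch by simp
    also have "\<dots> \<le> e / 2 + e / 4 + e / 4"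
    proof -
      note est' = est[folded X_def]
      have dist: "exp (2*\<tau>) * (\<eta> / (1 - exp (-2*\<tau>)) + N * (X * exp X) * ZZ B * exp \<tau>)
         = exp (2*\<tau>) * (\<eta> / (1 - exp (-2*\<tau>))) + exp (2*\<tau>) * (N * (X * exp X) * ZZ B * exp \<tau>)"
        by (rule distrib_left)
      show ?thesis using est' dist term1 term2 term3 by linarith
    qed
    finally show "norm (f x' - f x'') \<le> e" by simp
  qed
qed

end

theorem lemma2p4:
  fixes k :: complex and \<delta> :: real and f h :: "real \<Rightarrow> complex"
  assumes "Re k < 0" and "\<delta> > 0"
    and "\<And>x. x \<in> \<rat> \<Longrightarrow> x \<notin> {-1..0} \<Longrightarrow> f x = f (x + 1)"
    and "\<And>x. x \<in> \<rat> \<Longrightarrow> x \<noteq> 0 \<Longrightarrow> \<bar>x\<bar> \<le> 1 \<Longrightarrow>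
           h x = f x - complex_of_real \<bar>x\<bar> powr (- k) * f (-1 / x)"
    and "\<And>\<eta>. \<eta> > 0 \<Longrightarrow> \<forall>\<^sub>F \<epsilon> in at_right 0. \<forall>x y. x \<noteq> 0 \<and> y \<noteq> 0 \<and>
           \<bar>x - y\<bar> < exp (- (\<epsilon> powr (\<delta> - 1))) \<and> \<bar>x\<bar> > 2 * \<epsilon> \<longrightarrow> norm (h x - h y) \<le> \<eta>"
    and "\<exists>C. \<forall>x. x \<noteq> 0 \<and> \<bar>x\<bar> \<le> 1 \<longrightarrow> norm (h x) \<le> C * exp (\<bar>x\<bar> powr (\<delta> - 1))"
  shows "propS (1 + \<delta>) f"
proof -
  interpret L k \<delta> f h by (rule L.intro) (fact assms)+
  show ?thesis by (rule propS_main)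
qed

end
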